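(* Let $G(z)=\sum_{n\ge0}a_n^2z^n$ be a transcendental entire function with $a_n\ge0$, and fix $\gamma\in(0,\tfrac12)$. Then there is a set $\mathcal{N}=\mathcal{N}_G\subset\mathbb{R}^+$ such that $\mathbb{R}^+\setminus\mathcal{N}$ has finite logarithmic measure and $H(t)=G(e^t)$ is local $\delta$-admissible on $\{t:e^t\in\mathcal{N}\}$ with \[ \delta(t)=\frac{B(t)}{K^3(e^t)}. \]
   Context: $A=H'/H$, $B=A'$. The maximal term is $\mu(r)=\max_n a_n^2r^n$, the central index is $N(r)=\max\{n:a_n^2r^n=\mu(r)\}$, and $K(r)=N(r)^{(1+\gamma)/2}$. A set $E\subset\mathbb{R}^+$ has finite logarithmic measure if $\int_E dt/t<\infty$. $H$ is local $\delta$-admissible on $T$ if for every $\varepsilon>0$ there exist $\eta>0$ and $t_0(\varepsilon)$ such that for all $t\in T$ with $t>t_0(\varepsilon)$ and all complex $\tau$ with $|\tau|\le\eta\delta(t)$, $\log\frac{H(t+\tau)}{H(t)}=\tau A(t)+\frac12\tau^2B(t)+h_t(\tau)$ with $|h_t(\tau)|\le\varepsilon|\tau|^2B(t)$ (logarithm: the branch analytic in $\tau$ vanishing at $\tau=0$). *)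

theory Defs
  imports "HOL-Analysis.Analysis"
begin

definition G_fun :: "(nat \<Rightarrow> real) \<Rightarrow> complex \<Rightarrow> complex" where
  "G_fun a z = (\<Sum>n. complex_of_real ((a n)\<^sup>2) * z ^ n)"

definition H_fun :: "(nat \<Rightarrow> real) \<Rightarrow> complex \<Rightarrow> complex" where
  "H_fun a w = G_fun a (exp w)"

definition A_fun :: "(nat \<Rightarrow> real) \<Rightarrow> complex \<Rightarrow> complex" where
  "A_fun a w = deriv (H_fun a) w / H_fun a w"

definition B_fun :: "(nat \<Rightarrow> real) \<Rightarrow> complex \<Rightarrow> complex" where
  "B_fun a w = deriv (A_fun a) w"

definition max_term :: "(nat \<Rightarrow> real) \<Rightarrow> real \<Rightarrow> real" where
  "max_term a r = (SUP n. (a n)\<^sup>2 * r ^ n)"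

definition central_index :: "(nat \<Rightarrow> real) \<Rightarrow> real \<Rightarrow> nat" where
  "central_index a r = Max {n. (a n)\<^sup>2 * r ^ n = max_term a r}"

definition K_fun :: "(nat \<Rightarrow> real) \<Rightarrow> real \<Rightarrow> real \<Rightarrow> real" where
  "K_fun a \<gamma> r = real (central_index a r) powr ((1 + \<gamma>) / 2)"

definition finite_log_measure :: "real set \<Rightarrow> bool" where
  "finite_log_measure E \<longleftrightarrow> (\<integral>\<^sup>+ t. ennreal (indicator E t / t) \<partial>lborel) < \<infinity>"

text \<open>The logarithm
  log(H(t+tau)/H(t)) is represented by a branch L, continuous on the closed disk,
  analytic in its interior, with L 0 = 0 and exp (L tau) = H(t+tau)/H(t).\<close>
definition local_delta_admissible ::
  "(complex \<Rightarrow> complex) \<Rightarrow> (complex \<Rightarrow> complex) \<Rightarrow> (complex \<Rightarrow> complex)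
     \<Rightarrow> (real \<Rightarrow> real) \<Rightarrow> real set \<Rightarrow> bool" where
  "local_delta_admissible H A B \<delta> T \<longleftrightarrow>
    (\<forall>\<epsilon>>0. \<exists>\<eta>>0. \<exists>t0. \<forall>t\<in>T. t > t0 \<longrightarrow>
       (\<exists>L. continuous_on (cball 0 (\<eta> * \<delta> t)) L \<and>
            L holomorphic_on ball 0 (\<eta> * \<delta> t) \<and> L 0 = 0 \<and>
            (\<forall>\<tau>. norm \<tau> \<le> \<eta> * \<delta> t \<longrightarrow>
               exp (L \<tau>) = H (of_real t + \<tau>) / H (of_real t) \<and>
               norm (L \<tau> - (\<tau> * A (of_real t) + \<tau>\<^sup>2 * B (of_real t) / 2))
                 \<le> \<epsilon> * (norm \<tau>)\<^sup>2 * Re (B (of_real t)))))"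

end

theory Submission
  imports Defs
begin


lemma ps_shift_sums:
  fixes d :: "nat \<Rightarrow> 'a::{real_normed_field,banach}"
  assumes "\<And>y. summable (\<lambda>n. d n * y ^ n)"
  shows "(\<lambda>n. of_nat n * d n * x ^ n) sums (x * (\<Sum>n. diffs d n * x ^ n))"
proof -
  have "(\<lambda>n. of_nat n * d n * x^(n - Suc 0)) sums (\<Sum>n. diffs d n * x^n)"
    by (rule diffs_equiv[OF termdiff_converges_all[OF assms]])
  from sums_mult[OF this, of x]
  have "(\<lambda>n. x * (of_nat n * d n * x^(n - Suc 0))) sums (x * (\<Sum>n. diffs d n * x^n))" .
  moreover have "x * (of_nat n * d n * x^(n - Suc 0)) = of_nat n * d n * x ^ n" for n
    by (cases n) (auto simp: algebra_simps)
  ultimately show ?thesis by simp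
qed

lemma ps_summable_mult_n:
  fixes d :: "nat \<Rightarrow> 'a::{real_normed_field,banach}"
  assumes "\<And>y. summable (\<lambda>n. d n * y ^ n)"
  shows "summable (\<lambda>n. (of_nat n * d n) * x ^ n)"
  using ps_shift_sums[OF assms] by (auto simp: sums_iff)

lemma ps_exp_deriv:
  fixes d :: "nat \<Rightarrow> 'a::{real_normed_field,banach}"
  assumes "\<And>y. summable (\<lambda>n. d n * y ^ n)"
  shows "((\<lambda>w. \<Sum>n. d n * exp w ^ n) has_field_derivative (\<Sum>n. of_nat n * d n * exp w ^ n)) (at w)"
proof -
  have D: "((\<lambda>x. \<Sum>n. d n * x^n) has_field_derivative (\<Sum>n. diffs d n * (exp w)^n)) (at (exp w))"
    by (rule termdiffs_strong_converges_everywhere[OF assms])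
  have "((\<lambda>w. \<Sum>n. d n * exp w ^ n) has_field_derivative (\<Sum>n. diffs d n * (exp w)^n) * exp w) (at w)"
    using DERIV_chain2[OF D DERIV_exp] .
  moreover have "(\<Sum>n. diffs d n * (exp w)^n) * exp w = (\<Sum>n. of_nat n * d n * exp w ^ n)"
    using ps_shift_sums[OF assms, of "exp w"] by (simp add: sums_iff mult.commute)
  ultimately show ?thesis by simp
qed


locale WV =
  fixes a :: "nat \<Rightarrow> real"
  assumes entire: "\<And>z::complex. summable (\<lambda>n. complex_of_real ((a n)\<^sup>2) * z ^ n)"
    and transc: "infinite {n. a n \<noteq> 0}"
begin

definition Mr :: "nat \<Rightarrow> real \<Rightarrow> real" where
  "Mr k s = (\<Sum>n. real n ^ k * (a n)\<^sup>2 * exp s ^ n)"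

definition Hc :: "nat \<Rightarrow> complex \<Rightarrow> complex" where
  "Hc k w = (\<Sum>n. of_nat n ^ k * complex_of_real ((a n)\<^sup>2) * exp w ^ n)"

lemma summable_real: "summable (\<lambda>n. (a n)\<^sup>2 * x ^ n)"
proof -
  have "summable (\<lambda>n. complex_of_real ((a n)\<^sup>2) * complex_of_real x ^ n)" by (rule entire)
  then have "summable (\<lambda>n. complex_of_real ((a n)\<^sup>2 * x ^ n))" by simp
  then show ?thesis by (simp only: summable_complex_of_real)
qed

lemma summable_Mk_real: "summable (\<lambda>n. real n ^ k * (a n)\<^sup>2 * x ^ n)"
proof (induction k arbitrary: x)
  case 0 then show ?case using summable_real by simp
next
  case (Suc k)
  have "summable (\<lambda>n. (of_nat n * (real n ^ k * (a n)\<^sup>2)) * x ^ n)"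
    by (rule ps_summable_mult_n) (use Suc in auto)
  then show ?case by (simp add: algebra_simps)
qed

lemma summable_Mk_cplx: "summable (\<lambda>n. of_nat n ^ k * complex_of_real ((a n)\<^sup>2) * z ^ n)"
proof (induction k arbitrary: z)
  case 0 then show ?case using entire by simp
next
  case (Suc k)
  have "summable (\<lambda>n. (of_nat n * (of_nat n ^ k * complex_of_real ((a n)\<^sup>2))) * z ^ n)"
    by (rule ps_summable_mult_n) (use Suc in auto)
  then show ?case by (simp add: algebra_simps)
qed

lemma Mr_deriv: "(Mr k has_real_derivative Mr (Suc k) s) (at s)"
proof -
  have "((\<lambda>w. \<Sum>n. (real n ^ k * (a n)\<^sup>2) * exp w ^ n) has_real_derivative
     (\<Sum>n. of_nat n * (real n ^ k * (a n)\<^sup>2) * exp s ^ n)) (at s)"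
    by (rule ps_exp_deriv) (use summable_Mk_real in auto)
  then show ?thesis unfolding Mr_def by (simp add: algebra_simps)
qed

lemma Hc_deriv: "(Hc k has_field_derivative Hc (Suc k) w) (at w)"
proof -
  have "((\<lambda>w. \<Sum>n. (of_nat n ^ k * complex_of_real ((a n)\<^sup>2)) * exp w ^ n) has_field_derivative
     (\<Sum>n. of_nat n * (of_nat n ^ k * complex_of_real ((a n)\<^sup>2)) * exp w ^ n)) (at w)"
    by (rule ps_exp_deriv) (use summable_Mk_cplx in auto)
  then show ?thesis unfolding Hc_def by (simp add: algebra_simps)
qed

lemma Hc_real: "Hc k (complex_of_real t) = complex_of_real (Mr k t)"
proof -
  have "Hc k (complex_of_real t) = (\<Sum>n. complex_of_real (real n ^ k * (a n)\<^sup>2 * exp t ^ n))"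
    unfolding Hc_def by (simp add: exp_of_real)
  also have "\<dots> = complex_of_real (Mr k t)"
    unfolding Mr_def by (rule suminf_of_real[symmetric]) (rule summable_Mk_real)
  finally show ?thesis .
qed

lemma H_eq: "H_fun a = Hc 0"
  by (rule ext) (simp add: H_fun_def G_fun_def Hc_def)

lemma deriv_H: "deriv (H_fun a) = Hc 1"
  by (rule ext) (simp add: H_eq DERIV_imp_deriv[OF Hc_deriv])

lemma A_eq: "A_fun a = (\<lambda>w. Hc 1 w / Hc 0 w)"
  by (rule ext) (simp add: A_fun_def deriv_H flip: H_eq)

lemma Mr_nonneg: "0 \<le> Mr k s"
  unfolding Mr_def by (rule suminf_nonneg[OF summable_Mk_real]) simp

lemma Mr0_pos: "0 < Mr 0 s"
proof -
  obtain m where "a m \<noteq> 0" using transc not_finite_existsD by auto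
  then have "0 < (a m)\<^sup>2 * exp s ^ m" by simp
  then show ?thesis unfolding Mr_def
    using summable_Mk_real[of 0] by (intro suminf_pos2[of _ m]) auto
qed

lemma B_real: "B_fun a (complex_of_real t) =
   complex_of_real ((Mr 2 t * Mr 0 t - Mr 1 t * Mr 1 t) / (Mr 0 t)\<^sup>2)"
proof -
  have ne: "Hc 0 (complex_of_real t) \<noteq> 0" using Mr0_pos[of t] by (simp add: Hc_real)
  have "((\<lambda>w. Hc 1 w / Hc 0 w) has_field_derivative
     (Hc 2 (complex_of_real t) * Hc 0 (complex_of_real t) - Hc 1 (complex_of_real t) * Hc 1 (complex_of_real t))
       / (Hc 0 (complex_of_real t) * Hc 0 (complex_of_real t))) (at (complex_of_real t))"
    using DERIV_divide[OF Hc_deriv[of 1] Hc_deriv[of 0] ne] by (simp add: numeral_2_eq_2)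
  then have "B_fun a (complex_of_real t) = (Hc 2 (complex_of_real t) * Hc 0 (complex_of_real t) - Hc 1 (complex_of_real t) * Hc 1 (complex_of_real t))
       / (Hc 0 (complex_of_real t) * Hc 0 (complex_of_real t))"
    unfolding B_fun_def A_eq by (rule DERIV_imp_deriv)
  then show ?thesis by (simp add: Hc_real power2_eq_square)
qed

lemma A_real: "A_fun a (complex_of_real t) = complex_of_real (Mr 1 t / Mr 0 t)"
  by (simp add: A_eq Hc_real)

end


context WV begin

definition psi :: "real \<Rightarrow> real" where "psi s = ln (Mr 0 s)"
definition am :: "real \<Rightarrow> real" where "am s = Mr 1 s / Mr 0 s"
definition bv :: "real \<Rightarrow> real" where
  "bv s = (Mr 2 s * Mr 0 s - Mr 1 s * Mr 1 s) / (Mr 0 s)\<^sup>2"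

lemma psi_deriv: "(psi has_real_derivative am s) (at s)"
proof -
  have "((\<lambda>s. ln (Mr 0 s)) has_real_derivative (1 / Mr 0 s) * Mr (Suc 0) s) (at s)"
    by (rule DERIV_chain2[OF DERIV_ln_divide[OF Mr0_pos] Mr_deriv])
  then show ?thesis unfolding psi_def am_def by simp
qed

lemma am_deriv: "(am has_real_derivative bv s) (at s)"
proof -
  have ne: "Mr 0 s \<noteq> 0" using Mr0_pos[of s] by simp
  have "((\<lambda>s. Mr 1 s / Mr 0 s) has_real_derivative
     (Mr (Suc 1) s * Mr 0 s - Mr 1 s * Mr (Suc 0) s) / (Mr 0 s * Mr 0 s)) (at s)"
    by (rule DERIV_divide[OF Mr_deriv Mr_deriv ne])
  then show ?thesis unfolding am_def bv_def by (simp add: power2_eq_square numeral_2_eq_2)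
qed

lemma am_cont: "continuous_on S am"
  using am_deriv by (meson DERIV_isCont continuous_at_imp_continuous_on)

lemma psi_cont: "continuous_on S psi"
  using psi_deriv by (meson DERIV_isCont continuous_at_imp_continuous_on)

lemma var_identity:
  "(\<Sum>n. (real n - x)\<^sup>2 * (a n)\<^sup>2 * exp s ^ n) = Mr 2 s - 2 * x * Mr 1 s + x\<^sup>2 * Mr 0 s"
proof -
  have s0: "summable (\<lambda>n. real n ^ 0 * (a n)\<^sup>2 * exp s ^ n)" by (rule summable_Mk_real)
  have s1: "summable (\<lambda>n. real n ^ 1 * (a n)\<^sup>2 * exp s ^ n)" by (rule summable_Mk_real)
  have s2: "summable (\<lambda>n. real n ^ 2 * (a n)\<^sup>2 * exp s ^ n)" by (rule summable_Mk_real)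
  have "(\<lambda>n. real n ^ 2 * (a n)\<^sup>2 * exp s ^ n - 2 * x * (real n ^ 1 * (a n)\<^sup>2 * exp s ^ n)
      + x\<^sup>2 * (real n ^ 0 * (a n)\<^sup>2 * exp s ^ n)) sums (Mr 2 s - 2 * x * Mr 1 s + x\<^sup>2 * Mr 0 s)"
    unfolding Mr_def
    by (intro sums_add sums_diff sums_mult summable_sums s0 s1 s2)
  moreover have "(\<lambda>n. real n ^ 2 * (a n)\<^sup>2 * exp s ^ n - 2 * x * (real n ^ 1 * (a n)\<^sup>2 * exp s ^ n)
      + x\<^sup>2 * (real n ^ 0 * (a n)\<^sup>2 * exp s ^ n)) = (\<lambda>n. (real n - x)\<^sup>2 * (a n)\<^sup>2 * exp s ^ n)"
    by (rule ext) (simp add: power2_eq_square algebra_simps)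
  ultimately show ?thesis by (simp add: sums_iff)
qed

lemma summable_var: "summable (\<lambda>n. (real n - x)\<^sup>2 * (a n)\<^sup>2 * exp s ^ n)"
proof -
  have s0: "summable (\<lambda>n. real n ^ 0 * (a n)\<^sup>2 * exp s ^ n)" by (rule summable_Mk_real)
  have s1: "summable (\<lambda>n. real n ^ 1 * (a n)\<^sup>2 * exp s ^ n)" by (rule summable_Mk_real)
  have s2: "summable (\<lambda>n. real n ^ 2 * (a n)\<^sup>2 * exp s ^ n)" by (rule summable_Mk_real)
  have "summable (\<lambda>n. real n ^ 2 * (a n)\<^sup>2 * exp s ^ n - 2 * x * (real n ^ 1 * (a n)\<^sup>2 * exp s ^ n)
      + x\<^sup>2 * (real n ^ 0 * (a n)\<^sup>2 * exp s ^ n))"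
    by (intro summable_add summable_diff summable_mult s0 s1 s2)
  moreover have "(\<lambda>n. real n ^ 2 * (a n)\<^sup>2 * exp s ^ n - 2 * x * (real n ^ 1 * (a n)\<^sup>2 * exp s ^ n)
      + x\<^sup>2 * (real n ^ 0 * (a n)\<^sup>2 * exp s ^ n)) = (\<lambda>n. (real n - x)\<^sup>2 * (a n)\<^sup>2 * exp s ^ n)"
    by (rule ext) (simp add: power2_eq_square algebra_simps)
  ultimately show ?thesis by simp
qed

lemma bv_eq: "bv s = (\<Sum>n. (real n - am s)\<^sup>2 * (a n)\<^sup>2 * exp s ^ n) / Mr 0 s"
proof -
  have p: "Mr 0 s > 0" by (rule Mr0_pos)
  show ?thesis unfolding var_identity bv_def am_def using p
    by (simp add: field_simps power2_eq_square)
qed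

lemma bv_nonneg: "0 \<le> bv s"
proof -
  have "0 \<le> (\<Sum>n. (real n - am s)\<^sup>2 * (a n)\<^sup>2 * exp s ^ n)"
    by (rule suminf_nonneg[OF summable_var]) simp
  then show ?thesis unfolding bv_eq using Mr0_pos[of s] by simp
qed

lemma am_mono: "x \<le> y \<Longrightarrow> am x \<le> am y"
  by (rule DERIV_nonneg_imp_nondecreasing[of x y am]) (use am_deriv bv_nonneg in blast)+

lemma psi_upper: assumes "0 < u" shows "psi (s + u) - psi s - u * am s \<le> u * (am (s + u) - am s)"
proof -
  obtain z where z: "s < z" "z < s + u" "psi (s + u) - psi s = (s + u - s) * am z"
    using MVT2[of s "s + u" psi am] psi_deriv assms by auto
  have "am z \<le> am (s + u)" using z by (intro am_mono) simp
  then show ?thesis using z assms by (simp add: algebra_simps mult_left_mono)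
qed

lemma psi_lower: assumes "0 < u" shows "psi (s - u) - psi s + u * am s \<le> u * (am s - am (s - u))"
proof -
  obtain z where z: "s - u < z" "z < s" "psi s - psi (s - u) = (s - (s - u)) * am z"
    using MVT2[of "s - u" s psi am] psi_deriv assms by auto
  have "am (s - u) \<le> am z" using z by (intro am_mono) simp
  then show ?thesis using z assms by (simp add: algebra_simps mult_left_mono)
qed

lemma psi_mvt_lower: assumes "x \<le> y" shows "psi y - psi x \<ge> (y - x) * am x"
proof (cases "x = y")
  case False
  then have "x < y" using assms by simp
  obtain z where z: "x < z" "z < y" "psi y - psi x = (y - x) * am z"
    using MVT2[of x y psi am] psi_deriv \<open>x < y\<close> by auto
  have "am x \<le> am z" using z by (intro am_mono) simp
  then show ?thesis using z assms by (simp add: mult_left_mono)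
qed simp

lemma psi_mvt_upper: assumes "x \<le> y" shows "psi y - psi x \<le> (y - x) * am y"
proof (cases "x = y")
  case False
  then have "x < y" using assms by simp
  obtain z where z: "x < z" "z < y" "psi y - psi x = (y - x) * am z"
    using MVT2[of x y psi am] psi_deriv \<open>x < y\<close> by auto
  have "am z \<le> am y" using z by (intro am_mono) simp
  then show ?thesis using z assms by (simp add: mult_left_mono)
qed simp

lemma term_le_Mr0: "(a n)\<^sup>2 * exp s ^ n \<le> Mr 0 s"
proof -
  have "(\<Sum>i\<in>{n}. real i ^ 0 * (a i)\<^sup>2 * exp s ^ i) \<le> Mr 0 s"
    unfolding Mr_def by (rule sum_le_suminf[OF summable_Mk_real]) auto
  then show ?thesis by simp
qed

lemma am_unbounded: "\<exists>s. am s > X"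
proof (rule ccontr)
  assume "\<not> ?thesis"
  then have b: "\<And>s. am s \<le> X" by (simp add: not_less)
  have "infinite {n. a n \<noteq> 0 \<and> n > nat \<lceil>X\<rceil>}"
  proof -
    have "{n. a n \<noteq> 0} \<subseteq> {n. a n \<noteq> 0 \<and> n > nat \<lceil>X\<rceil>} \<union> {..nat \<lceil>X\<rceil>}" by auto
    then show ?thesis using transc finite_subset by auto
  qed
  then obtain m where m: "a m \<noteq> 0" "m > nat \<lceil>X\<rceil>" using not_finite_existsD by blast
  then have mX: "real m > X" by linarith
  have cpos: "(a m)\<^sup>2 > 0" using m by simp
  define s where "s = max 1 ((psi 0 - ln ((a m)\<^sup>2)) / (real m - X) + 1)"
  have s0: "s > 0" unfolding s_def by simp
  have "psi s - psi 0 \<le> (s - 0) * am s" by (rule psi_mvt_upper) (use s0 in simp)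
  also have "\<dots> \<le> s * X" using b[of s] s0 by (simp add: mult_left_mono)
  finally have u: "psi s \<le> psi 0 + s * X" by simp
  have "(a m)\<^sup>2 * exp s ^ m \<le> Mr 0 s" by (rule term_le_Mr0)
  then have "ln ((a m)\<^sup>2 * exp s ^ m) \<le> psi s" unfolding psi_def using cpos
    by (subst ln_le_cancel_iff) (auto simp: Mr0_pos)
  then have "ln ((a m)\<^sup>2) + real m * s \<le> psi s" using cpos by (simp add: ln_mult ln_realpow)
  with u have "ln ((a m)\<^sup>2) + real m * s \<le> psi 0 + s * X" by simp
  then have "s * (real m - X) \<le> psi 0 - ln ((a m)\<^sup>2)" by (simp add: algebra_simps)
  moreover have "s * (real m - X) > psi 0 - ln ((a m)\<^sup>2)"
  proof -
    have "s \<ge> (psi 0 - ln ((a m)\<^sup>2)) / (real m - X) + 1" unfolding s_def by simp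
    then have "((psi 0 - ln ((a m)\<^sup>2)) / (real m - X) + 1) * (real m - X) \<le> s * (real m - X)"
      using mX by (simp add: mult_right_mono)
    moreover have "((psi 0 - ln ((a m)\<^sup>2)) / (real m - X) + 1) * (real m - X) = psi 0 - ln ((a m)\<^sup>2) + (real m - X)" using mX by (simp add: field_simps)
    ultimately have "psi 0 - ln ((a m)\<^sup>2) + (real m - X) \<le> s * (real m - X)" by simp
    then show ?thesis using mX by simp
  qed
  ultimately show False by simp
qed

lemma am_eventually: "\<exists>s0. \<forall>s\<ge>s0. am s \<ge> X"
proof -
  obtain s0 where "am s0 > X" using am_unbounded by blast
  then show ?thesis using am_mono by (meson less_le_trans order.strict_implies_order)
qed

end


lemma exp_ge_pow: assumes "0 \<le> x" shows "x ^ n / fact n \<le> exp (x::real)"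
proof -
  have "(\<lambda>k. x ^ k /\<^sub>R fact k) sums exp x" by (rule exp_converges)
  then have "(\<Sum>k\<in>{n}. x ^ k /\<^sub>R fact k) \<le> exp x"
    using assms by (intro sums_le[OF _ sums_If_finite_set]) (auto simp: sums_iff)
  then show ?thesis by (simp add: divide_inverse mult.commute)
qed

lemma cube_le: assumes "0 \<le> (y::real)" shows "y ^ 3 \<le> 48 * exp (y / 2)"
proof -
  have "(y/2) ^ 3 / fact 3 \<le> exp (y / 2)" by (rule exp_ge_pow) (use assms in simp)
  then show ?thesis by (simp add: fact_numeral power_divide)
qed

lemma sq_le: assumes "0 \<le> (y::real)" shows "y ^ 2 \<le> 2 * exp y"
proof -
  have "y ^ 2 / fact 2 \<le> exp y" by (rule exp_ge_pow) (use assms in simp)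
  then show ?thesis by (simp add: fact_numeral)
qed

lemma exp_abs_le: "exp \<bar>y\<bar> \<le> exp y + exp (- y::real)"
  by (cases "y \<ge> 0") (auto simp: add_increasing add_increasing2)

lemma sq_exp_bound: assumes "v > 0" shows "(x::real)\<^sup>2 \<le> 2 / v\<^sup>2 * (exp (v * x) + exp (- (v * x)))"
proof -
  have "(v * \<bar>x\<bar>)^2 \<le> 2 * exp (v * \<bar>x\<bar>)" by (rule sq_le) (use assms in simp)
  also have "exp (v * \<bar>x\<bar>) = exp \<bar>v * x\<bar>" using assms by (simp add: abs_mult)
  also have "\<dots> \<le> exp (v * x) + exp (- (v * x))" by (rule exp_abs_le)
  finally have "v\<^sup>2 * x\<^sup>2 \<le> 2 * (exp (v * x) + exp (- (v * x)))" by (simp add: power_mult_distrib)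
  then show ?thesis using assms by (simp add: field_simps)
qed

lemma cube_exp_bound:
  assumes "v > 0" "0 \<le> r" "r \<le> v / 2"
  shows "\<bar>x::real\<bar> ^ 3 * exp (r * \<bar>x\<bar>) \<le> 48 / v ^ 3 * (exp (v * x) + exp (- (v * x)))"
proof -
  have "(v * \<bar>x\<bar>)^3 \<le> 48 * exp (v * \<bar>x\<bar> / 2)" by (rule cube_le) (use assms in simp)
  then have c: "\<bar>x\<bar>^3 \<le> 48 / v^3 * exp (v * \<bar>x\<bar> / 2)" using assms by (simp add: field_simps power_mult_distrib)
  have "\<bar>x\<bar> ^ 3 * exp (r * \<bar>x\<bar>) \<le> 48 / v^3 * exp (v * \<bar>x\<bar> / 2) * exp (v * \<bar>x\<bar> / 2)"
  proof (rule mult_mono[OF c])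
    have "r * \<bar>x\<bar> \<le> (v / 2) * \<bar>x\<bar>" using assms by (intro mult_right_mono) auto
    then show "exp (r * \<bar>x\<bar>) \<le> exp (v * \<bar>x\<bar> / 2)" by simp
  qed (use assms in auto)
  also have "\<dots> = 48 / v^3 * exp \<bar>v * x\<bar>" using assms by (simp add: mult_exp_exp abs_mult)
  also have "\<dots> \<le> 48 / v^3 * (exp (v * x) + exp (- (v * x)))"
    using assms by (intro mult_left_mono exp_abs_le) auto
  finally show ?thesis .
qed

lemma suminf_cadd: "summable f \<Longrightarrow> summable g \<Longrightarrow> (\<Sum>n. (C::real) * (f n + g n)) = C * (suminf f + suminf g)"
proof -
  assume f: "summable f" and g: "summable g"
  have "(\<Sum>n. C * (f n + g n)) = C * (\<Sum>n. f n + g n)" by (rule suminf_mult[OF summable_add[OF f g]])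
  also have "(\<Sum>n. f n + g n) = suminf f + suminf g" by (rule suminf_add[OF f g, symmetric])
  finally show ?thesis .
qed

context WV begin

definition ES :: "real \<Rightarrow> real \<Rightarrow> real" where
  "ES s v = (\<Sum>n. (a n)\<^sup>2 * exp s ^ n * exp (v * (real n - am s)))"

lemma ES_sums: "(\<lambda>n. (a n)\<^sup>2 * exp s ^ n * exp (v * (real n - am s))) sums (Mr 0 (s + v) * exp (- v * am s))"
proof -
  have "(\<lambda>n. (real n ^ 0 * (a n)\<^sup>2 * exp (s + v) ^ n) * exp (- v * am s)) sums (Mr 0 (s + v) * exp (- v * am s))"
    unfolding Mr_def by (intro sums_mult2 summable_sums summable_Mk_real)
  moreover have "(\<lambda>n. (real n ^ 0 * (a n)\<^sup>2 * exp (s + v) ^ n) * exp (- v * am s)) = (\<lambda>n. (a n)\<^sup>2 * exp s ^ n * exp (v * (real n - am s)))"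
  proof (rule ext)
    fix n
    have "exp (v * (real n - am s)) = exp (real n * v) * exp (- v * am s)"
      by (simp add: algebra_simps flip: exp_add)
    also have "exp (real n * v) = exp v ^ n" by (rule exp_of_nat_mult)
    finally show "(real n ^ 0 * (a n)\<^sup>2 * exp (s + v) ^ n) * exp (- v * am s) = (a n)\<^sup>2 * exp s ^ n * exp (v * (real n - am s))" by (simp add: exp_add power_mult_distrib)
  qed
  ultimately show ?thesis by (simp only:)
qed

lemma ES_summable: "summable (\<lambda>n. (a n)\<^sup>2 * exp s ^ n * exp (v * (real n - am s)))"
  using ES_sums by (auto simp: sums_iff)

lemma ES_eq: "ES s v = Mr 0 s * exp (psi (s + v) - psi s - v * am s)"
proof -
  have "ES s v = Mr 0 (s + v) * exp (- v * am s)" unfolding ES_def using ES_sums by (simp add: sums_iff)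
  also have "\<dots> = Mr 0 s * exp (psi (s + v) - psi s - v * am s)"
    unfolding psi_def using Mr0_pos[of s] Mr0_pos[of "s+v"]
    by (simp add: exp_diff exp_minus exp_add divide_inverse)
  finally show ?thesis .
qed

lemma sum_weights_X: "(\<lambda>n. (a n)\<^sup>2 * exp s ^ n * (real n - am s)) sums 0"
proof -
  have "(\<lambda>n. real n ^ 1 * (a n)\<^sup>2 * exp s ^ n - am s * (real n ^ 0 * (a n)\<^sup>2 * exp s ^ n)) sums (Mr 1 s - am s * Mr 0 s)"
    unfolding Mr_def by (intro sums_diff sums_mult summable_sums summable_Mk_real)
  moreover have "Mr 1 s - am s * Mr 0 s = 0" unfolding am_def using Mr0_pos[of s] by simp
  ultimately show ?thesis by (simp add: algebra_simps)
qed

lemma sum_weights_X2: "(\<lambda>n. (a n)\<^sup>2 * exp s ^ n * (real n - am s)\<^sup>2) sums (bv s * Mr 0 s)"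
proof -
  have "(\<lambda>n. (real n - am s)\<^sup>2 * (a n)\<^sup>2 * exp s ^ n) sums (bv s * Mr 0 s)"
    using summable_var[of "am s" s] bv_eq[of s] Mr0_pos[of s] by (simp add: sums_iff)
  then show ?thesis by (simp add: algebra_simps)
qed

lemma sum_weights_1: "(\<lambda>n. (a n)\<^sup>2 * exp s ^ n) sums (Mr 0 s)"
  using summable_Mk_real[of 0 "exp s"] unfolding Mr_def by (simp add: summable_sums)

definition good_at :: "real \<Rightarrow> real \<Rightarrow> bool" where
  "good_at s v \<longleftrightarrow> v > 0 \<and> psi (s + v) - psi s - v * am s \<le> 2 \<and> psi (s - v) - psi s + v * am s \<le> 2"

lemma ES_bounds:
  assumes "good_at s v"
  shows "ES s v \<le> exp 2 * Mr 0 s" "ES s (-v) \<le> exp 2 * Mr 0 s"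
proof -
  show "ES s v \<le> exp 2 * Mr 0 s" unfolding ES_eq using assms Mr0_pos[of s]
    by (auto simp: good_at_def mult.commute intro!: mult_right_mono)
  show "ES s (-v) \<le> exp 2 * Mr 0 s" unfolding ES_eq using assms Mr0_pos[of s]
    by (auto simp: good_at_def mult.commute intro!: mult_right_mono)
qed

lemma bv_bound:
  assumes "good_at s v"
  shows "bv s \<le> 4 * exp 2 / v\<^sup>2"
proof -
  have v: "v > 0" using assms by (simp add: good_at_def)
  let ?w = "\<lambda>n. (a n)\<^sup>2 * exp s ^ n"
  have "bv s * Mr 0 s = (\<Sum>n. ?w n * (real n - am s)\<^sup>2)" using sum_weights_X2 by (simp add: sums_iff)
  also have "\<dots> \<le> (\<Sum>n. 2 / v\<^sup>2 * (?w n * exp (v * (real n - am s)) + ?w n * exp (-v * (real n - am s))))"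
  proof (rule suminf_le)
    show "?w n * (real n - am s)\<^sup>2 \<le> 2 / v\<^sup>2 * (?w n * exp (v * (real n - am s)) + ?w n * exp (-v * (real n - am s)))" for n
      using mult_left_mono[OF sq_exp_bound[OF v, of "real n - am s"], of "?w n"]
      by (simp add: algebra_simps)
    show "summable (\<lambda>n. ?w n * (real n - am s)\<^sup>2)" using sum_weights_X2 by (simp add: sums_iff)
    show "summable (\<lambda>n. 2 / v\<^sup>2 * (?w n * exp (v * (real n - am s)) + ?w n * exp (-v * (real n - am s))))"
      by (intro summable_mult summable_add ES_summable)
  qed
  also have "\<dots> = 2 / v\<^sup>2 * (ES s v + ES s (-v))"
    unfolding ES_def by (rule suminf_cadd[OF ES_summable ES_summable])
  also have "\<dots> \<le> 2 / v\<^sup>2 * (exp 2 * Mr 0 s + exp 2 * Mr 0 s)"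
    using ES_bounds[OF assms] v by (intro mult_left_mono add_mono) auto
  finally have "bv s * Mr 0 s \<le> (4 * exp 2 / v\<^sup>2) * Mr 0 s" by (simp add: algebra_simps)
  then show ?thesis using Mr0_pos[of s] by (simp only: mult_le_cancel_right_pos)
qed

lemma cube_sum_bound:
  assumes "good_at s v" "0 \<le> r" "r \<le> v / 2"
  shows "summable (\<lambda>n. (a n)\<^sup>2 * exp s ^ n * (\<bar>real n - am s\<bar> ^ 3 * exp (r * \<bar>real n - am s\<bar>)))"
    "(\<Sum>n. (a n)\<^sup>2 * exp s ^ n * (\<bar>real n - am s\<bar> ^ 3 * exp (r * \<bar>real n - am s\<bar>))) \<le> 96 * exp 2 / v ^ 3 * Mr 0 s"
proof -
  have v: "v > 0" using assms by (simp add: good_at_def)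
  let ?w = "\<lambda>n. (a n)\<^sup>2 * exp s ^ n"
  let ?g = "\<lambda>n. 48 / v ^ 3 * (?w n * exp (v * (real n - am s)) + ?w n * exp (-v * (real n - am s)))"
  have le: "?w n * (\<bar>real n - am s\<bar> ^ 3 * exp (r * \<bar>real n - am s\<bar>)) \<le> ?g n" for n
    using mult_left_mono[OF cube_exp_bound[OF v assms(2,3), of "real n - am s"], of "?w n"]
    by (simp add: algebra_simps)
  have sg: "summable ?g" by (intro summable_mult summable_add ES_summable)
  show s: "summable (\<lambda>n. ?w n * (\<bar>real n - am s\<bar> ^ 3 * exp (r * \<bar>real n - am s\<bar>)))"
    by (rule summable_comparison_test'[OF sg, of 0]) (use le in auto)
  have "(\<Sum>n. ?w n * (\<bar>real n - am s\<bar> ^ 3 * exp (r * \<bar>real n - am s\<bar>))) \<le> suminf ?g"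
    by (rule suminf_le[OF le s sg])
  also have "\<dots> = 48 / v ^ 3 * (ES s v + ES s (-v))"
    unfolding ES_def by (rule suminf_cadd[OF ES_summable ES_summable])
  also have "\<dots> \<le> 48 / v ^ 3 * (exp 2 * Mr 0 s + exp 2 * Mr 0 s)"
    using ES_bounds[OF assms(1)] v by (intro mult_left_mono add_mono) auto
  finally show "(\<Sum>n. ?w n * (\<bar>real n - am s\<bar> ^ 3 * exp (r * \<bar>real n - am s\<bar>))) \<le> 96 * exp 2 / v ^ 3 * Mr 0 s"
    by (simp add: algebra_simps)
qed

end


lemma exp_taylor2: "norm (exp z - 1 - z - z\<^sup>2 / 2) \<le> exp (norm z) * norm z ^ 3 / 2"
  for z :: complex
proof -
  have "norm (exp z - (\<Sum>i\<le>2. z ^ i / fact i)) \<le> exp (norm z) * (norm z ^ Suc 2) / fact 2"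
    by (rule Taylor_exp_field)
  moreover have "(\<Sum>i\<le>2. z ^ i / fact i) = 1 + z + z\<^sup>2 / 2"
    by (simp add: numeral_2_eq_2 fact_numeral)
  ultimately show ?thesis by (simp add: numeral_3_eq_3 fact_numeral algebra_simps)
qed

context WV begin

definition Fc :: "real \<Rightarrow> complex \<Rightarrow> complex" where
  "Fc s \<tau> = H_fun a (complex_of_real s + \<tau>) / (H_fun a (complex_of_real s) * exp (\<tau> * complex_of_real (am s)))"

lemma Fc_sums: "(\<lambda>n. complex_of_real ((a n)\<^sup>2 * exp s ^ n) * exp (\<tau> * complex_of_real (real n - am s)))
   sums (H_fun a (complex_of_real s + \<tau>) * exp (- \<tau> * complex_of_real (am s)))"
proof -
  have sm: "summable (\<lambda>n. of_nat n ^ 0 * complex_of_real ((a n)\<^sup>2) * exp (complex_of_real s + \<tau>) ^ n)"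
    by (rule summable_Mk_cplx)
  have "(\<lambda>n. (of_nat n ^ 0 * complex_of_real ((a n)\<^sup>2) * exp (complex_of_real s + \<tau>) ^ n) * exp (- \<tau> * complex_of_real (am s)))
     sums (Hc 0 (complex_of_real s + \<tau>) * exp (- \<tau> * complex_of_real (am s)))"
    unfolding Hc_def by (intro sums_mult2 summable_sums sm)
  moreover have "(\<lambda>n. (of_nat n ^ 0 * complex_of_real ((a n)\<^sup>2) * exp (complex_of_real s + \<tau>) ^ n) * exp (- \<tau> * complex_of_real (am s)))
     = (\<lambda>n. complex_of_real ((a n)\<^sup>2 * exp s ^ n) * exp (\<tau> * complex_of_real (real n - am s)))"
  proof (rule ext)
    fix n
    have "exp (\<tau> * complex_of_real (real n - am s)) = exp (of_nat n * \<tau>) * exp (- \<tau> * complex_of_real (am s))"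
      by (simp add: algebra_simps flip: exp_add)
    also have "exp (of_nat n * \<tau>) = exp \<tau> ^ n" by (rule exp_of_nat_mult)
    finally show "(of_nat n ^ 0 * complex_of_real ((a n)\<^sup>2) * exp (complex_of_real s + \<tau>) ^ n) * exp (- \<tau> * complex_of_real (am s))
     = complex_of_real ((a n)\<^sup>2 * exp s ^ n) * exp (\<tau> * complex_of_real (real n - am s))"
      by (simp add: exp_add power_mult_distrib exp_of_real)
  qed
  ultimately show ?thesis by (simp only: H_eq)
qed

lemma H_real: "H_fun a (complex_of_real s) = complex_of_real (Mr 0 s)"
  by (simp add: H_eq Hc_real)

lemma Fc_taylor:
  assumes g: "good_at s v" and t: "norm \<tau> \<le> v / 2"
  shows "norm (Fc s \<tau> - 1 - \<tau>\<^sup>2 * complex_of_real (bv s) / 2) \<le> 48 * exp 2 * norm \<tau> ^ 3 / v ^ 3"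
proof -
  have v: "v > 0" using g by (simp add: good_at_def)
  define w where "w n = (a n)\<^sup>2 * exp s ^ n" for n
  define X where "X n = real n - am s" for n
  have w0: "w n \<ge> 0" for n unfolding w_def by simp
  define T where "T n = complex_of_real (w n) * (exp (\<tau> * complex_of_real (X n)) - 1 - \<tau> * complex_of_real (X n)
     - \<tau>\<^sup>2 * complex_of_real (X n) ^ 2 / 2)" for n
  have S1: "(\<lambda>n. complex_of_real (w n) * exp (\<tau> * complex_of_real (X n))) sums (H_fun a (complex_of_real s + \<tau>) * exp (- \<tau> * complex_of_real (am s)))"
    unfolding w_def X_def by (rule Fc_sums)
  have S2: "(\<lambda>n. complex_of_real (w n)) sums complex_of_real (Mr 0 s)"
    unfolding w_def using sum_weights_1[of s] by (simp only: sums_of_real_iff)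
  have S3: "(\<lambda>n. \<tau> * complex_of_real (w n * X n)) sums (\<tau> * 0)"
  proof -
    have "(\<lambda>n. complex_of_real (w n * X n)) sums complex_of_real 0"
      unfolding w_def X_def using sum_weights_X[of s] by (simp only: sums_of_real_iff)
    then show ?thesis by (intro sums_mult) simp
  qed
  have S4: "(\<lambda>n. \<tau>\<^sup>2 / 2 * complex_of_real (w n * (X n)\<^sup>2)) sums (\<tau>\<^sup>2 / 2 * complex_of_real (bv s * Mr 0 s))"
  proof -
    have "(\<lambda>n. complex_of_real (w n * (X n)\<^sup>2)) sums complex_of_real (bv s * Mr 0 s)"
      unfolding w_def X_def using sum_weights_X2[of s] by (simp only: sums_of_real_iff)
    then show ?thesis by (intro sums_mult)
  qed
  have ST: "T sums (H_fun a (complex_of_real s + \<tau>) * exp (- \<tau> * complex_of_real (am s)) - complex_of_real (Mr 0 s)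
      - \<tau> * 0 - \<tau>\<^sup>2 / 2 * complex_of_real (bv s * Mr 0 s))"
  proof -
    have "(\<lambda>n. complex_of_real (w n) * exp (\<tau> * complex_of_real (X n)) - complex_of_real (w n) - \<tau> * complex_of_real (w n * X n)
       - \<tau>\<^sup>2 / 2 * complex_of_real (w n * (X n)\<^sup>2)) sums (H_fun a (complex_of_real s + \<tau>) * exp (- \<tau> * complex_of_real (am s)) - complex_of_real (Mr 0 s)
      - \<tau> * 0 - \<tau>\<^sup>2 / 2 * complex_of_real (bv s * Mr 0 s))"
      by (intro sums_diff S1 S2 S3 S4)
    moreover have "(\<lambda>n. complex_of_real (w n) * exp (\<tau> * complex_of_real (X n)) - complex_of_real (w n) - \<tau> * complex_of_real (w n * X n)
       - \<tau>\<^sup>2 / 2 * complex_of_real (w n * (X n)\<^sup>2)) = T"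
      by (rule ext) (simp add: T_def algebra_simps)
    ultimately show ?thesis by (simp only:)
  qed
  have Tle: "norm (T n) \<le> norm \<tau> ^ 3 / 2 * (w n * (\<bar>X n\<bar> ^ 3 * exp (norm \<tau> * \<bar>X n\<bar>)))" for n
  proof -
    have "norm (T n) = w n * norm (exp (\<tau> * complex_of_real (X n)) - 1 - \<tau> * complex_of_real (X n)
     - (\<tau> * complex_of_real (X n))\<^sup>2 / 2)"
      unfolding T_def using w0[of n] by (simp add: norm_mult power_mult_distrib)
    also have "\<dots> \<le> w n * (exp (norm (\<tau> * complex_of_real (X n))) * norm (\<tau> * complex_of_real (X n)) ^ 3 / 2)"
      by (intro mult_left_mono exp_taylor2 w0)
    also have "\<dots> = norm \<tau> ^ 3 / 2 * (w n * (\<bar>X n\<bar> ^ 3 * exp (norm \<tau> * \<bar>X n\<bar>)))"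
      by (simp add: norm_mult power_mult_distrib)
    finally show ?thesis .
  qed
  have cb: "summable (\<lambda>n. w n * (\<bar>X n\<bar> ^ 3 * exp (norm \<tau> * \<bar>X n\<bar>)))"
    "(\<Sum>n. w n * (\<bar>X n\<bar> ^ 3 * exp (norm \<tau> * \<bar>X n\<bar>))) \<le> 96 * exp 2 / v ^ 3 * Mr 0 s"
    unfolding w_def X_def using cube_sum_bound[OF g _ t] by auto
  have sn: "summable (\<lambda>n. norm (T n))"
    by (rule summable_comparison_test'[OF summable_mult[OF cb(1), of "norm \<tau> ^ 3 / 2"], of 0]) (use Tle in auto)
  have "norm (suminf T) \<le> (\<Sum>n. norm (T n))" by (rule summable_norm[OF sn])
  also have "\<dots> \<le> (\<Sum>n. norm \<tau> ^ 3 / 2 * (w n * (\<bar>X n\<bar> ^ 3 * exp (norm \<tau> * \<bar>X n\<bar>))))"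
    by (rule suminf_le[OF Tle sn summable_mult[OF cb(1)]])
  also have "\<dots> = norm \<tau> ^ 3 / 2 * (\<Sum>n. w n * (\<bar>X n\<bar> ^ 3 * exp (norm \<tau> * \<bar>X n\<bar>)))"
    by (rule suminf_mult[OF cb(1)])
  also have "\<dots> \<le> norm \<tau> ^ 3 / 2 * (96 * exp 2 / v ^ 3 * Mr 0 s)"
    by (intro mult_left_mono cb(2)) auto
  finally have nT: "norm (suminf T) \<le> 48 * exp 2 * norm \<tau> ^ 3 / v ^ 3 * Mr 0 s" by (simp add: mult_ac)
  have M: "Mr 0 s > 0" by (rule Mr0_pos)
  have "Fc s \<tau> - 1 - \<tau>\<^sup>2 * complex_of_real (bv s) / 2 = suminf T / complex_of_real (Mr 0 s)"
  proof -
    define Hs where "Hs = H_fun a (complex_of_real s + \<tau>)"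
    define E where "E = exp (- \<tau> * complex_of_real (am s))"
    define Mc where "Mc = complex_of_real (Mr 0 s)"
    have Mc: "Mc \<noteq> 0" using M unfolding Mc_def by simp
    have eT: "suminf T = Hs * E - Mc - \<tau>\<^sup>2 / 2 * (complex_of_real (bv s) * Mc)"
      using ST unfolding Hs_def E_def Mc_def by (simp add: sums_iff)
    have "Fc s \<tau> = Hs * E / Mc" unfolding Fc_def H_real Hs_def E_def Mc_def
      by (simp add: exp_minus divide_inverse)
    then show ?thesis using Mc unfolding eT Mc_def[symmetric] by (simp add: field_simps)
  qed
  then have "norm (Fc s \<tau> - 1 - \<tau>\<^sup>2 * complex_of_real (bv s) / 2) = norm (suminf T) / Mr 0 s"
    using M by (simp add: norm_divide)
  also have "\<dots> \<le> 48 * exp 2 * norm \<tau> ^ 3 / v ^ 3" using nT M by (simp add: divide_le_eq)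
  finally show ?thesis .
qed

end


lemma num_est:
  fixes C0 C1 K b r \<epsilon> :: real
  assumes C0: "C0 > 0" and C1: "C1 > 0" and e: "\<epsilon> > 0" and K: "K > 0"
    and b0: "0 \<le> b" and bK: "b \<le> C0 * K\<^sup>2" and r0: "0 \<le> r"
    and rb: "r \<le> (min \<epsilon> 1 / (2 * C1 + 4 * C0 ^ 3 + 2 * C0 + 1)) * (b / K ^ 3)"
  shows "r \<le> 1 / (2 * K)"
    and "r\<^sup>2 * b / 2 + C1 * r ^ 3 * K ^ 3 \<le> 1 / 2"
    and "2 * (r\<^sup>2 * b / 2 + C1 * r ^ 3 * K ^ 3)\<^sup>2 + C1 * r ^ 3 * K ^ 3 \<le> \<epsilon> * r\<^sup>2 * b"
proof -
  define D where "D = 2 * C1 + 4 * C0 ^ 3 + 2 * C0 + 1"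
  define \<eta> where "\<eta> = min \<epsilon> 1 / D"
  have D: "D > 0" "D \<ge> 1" "D \<ge> 2 * C1" "D \<ge> 4 * C0 ^ 3" "D \<ge> 2 * C0"
  proof -
    have "C0 ^ 3 > 0" using C0 by simp
    then show "D > 0" "D \<ge> 1" "D \<ge> 2 * C1" "D \<ge> 4 * C0 ^ 3" "D \<ge> 2 * C0" unfolding D_def using C0 C1 by linarith+
  qed
  have \<eta>0: "\<eta> > 0" unfolding \<eta>_def using e D by auto
  have \<eta>1: "\<eta> \<le> 1 / D" "\<eta> \<le> \<epsilon> / D" unfolding \<eta>_def using D by (auto simp: divide_right_mono)
  have rb': "r \<le> \<eta> * (b / K ^ 3)" using rb unfolding \<eta>_def D_def .
  have rK: "r * K ^ 3 \<le> \<eta> * b" using rb' K by (simp add: field_simps)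
  have "r \<le> \<eta> * (C0 * K\<^sup>2 / K ^ 3)"
    using rb' \<eta>0 bK K by (meson divide_right_mono mult_left_mono order_trans zero_le_power less_imp_le)
  also have "C0 * K\<^sup>2 / K ^ 3 = C0 / K" using K by (simp add: power2_eq_square power3_eq_cube)
  finally have r1: "r \<le> \<eta> * C0 / K" by simp
  have \<eta>C0: "\<eta> * C0 \<le> 1 / 2"
  proof -
    have "\<eta> * C0 \<le> (1 / D) * C0" using \<eta>1 C0 by (intro mult_right_mono) auto
    also have "\<dots> \<le> 1 / 2" using D C0 by (simp add: field_simps)
    finally show ?thesis .
  qed
  have \<eta>C1: "\<eta> * C1 \<le> 1 / 2"
  proof -
    have "\<eta> * C1 \<le> (1 / D) * C1" using \<eta>1 C1 by (intro mult_right_mono) auto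
    also have "\<dots> \<le> 1 / 2" using D C1 by (simp add: field_simps)
    finally show ?thesis .
  qed
  show "r \<le> 1 / (2 * K)"
  proof -
    have "r \<le> \<eta> * C0 / K" by (rule r1)
    also have "\<dots> \<le> (1/2) / K" using \<eta>C0 K by (intro divide_right_mono) auto
    finally show ?thesis by simp
  qed
  define q where "q = r\<^sup>2 * b"
  have q0: "q \<ge> 0" unfolding q_def using b0 by simp
  have E1: "C1 * r ^ 3 * K ^ 3 \<le> C1 * \<eta> * q"
  proof -
    have "C1 * r ^ 3 * K ^ 3 = C1 * r\<^sup>2 * (r * K ^ 3)" by (simp add: power2_eq_square power3_eq_cube)
    also have "\<dots> \<le> C1 * r\<^sup>2 * (\<eta> * b)" using rK C1 by (intro mult_left_mono) auto
    finally show ?thesis unfolding q_def by (simp add: algebra_simps)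
  qed
  have qb: "q \<le> \<eta>\<^sup>2 * C0 ^ 3"
  proof -
    have "r\<^sup>2 \<le> (\<eta> * C0 / K)\<^sup>2" using r1 r0 by (intro power_mono) auto
    then have "q \<le> (\<eta> * C0 / K)\<^sup>2 * (C0 * K\<^sup>2)" unfolding q_def using bK b0
      by (intro mult_mono) auto
    also have "\<dots> = \<eta>\<^sup>2 * C0 ^ 3" using K by (simp add: field_simps power2_eq_square power3_eq_cube)
    finally show ?thesis .
  qed
  have S: "r\<^sup>2 * b / 2 + C1 * r ^ 3 * K ^ 3 \<le> q"
  proof -
    have "r\<^sup>2 * b / 2 + C1 * r ^ 3 * K ^ 3 \<le> q / 2 + (\<eta> * C1) * q" using E1 unfolding q_def by (simp add: algebra_simps)
    also have "\<dots> \<le> q / 2 + (1/2) * q" using \<eta>C1 q0 by (intro add_left_mono mult_right_mono) auto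
    finally show ?thesis by simp
  qed
  have S0: "0 \<le> r\<^sup>2 * b / 2 + C1 * r ^ 3 * K ^ 3" using b0 r0 C1 K by simp
  have \<eta>sq: "\<eta>\<^sup>2 * C0 ^ 3 \<le> 1 / 4"
  proof -
    have "\<eta>\<^sup>2 \<le> (1 / D)\<^sup>2" using \<eta>1 \<eta>0 by (intro power_mono) auto
    also have "(1/D)\<^sup>2 \<le> 1 / D" using D by (simp add: power2_eq_square field_simps)
    finally have "\<eta>\<^sup>2 * C0 ^ 3 \<le> (1 / D) * C0 ^ 3" using C0 by (intro mult_right_mono) auto
    also have "\<dots> \<le> 1 / 4" using D C0 by (simp add: field_simps)
    finally show ?thesis .
  qed
  show "r\<^sup>2 * b / 2 + C1 * r ^ 3 * K ^ 3 \<le> 1 / 2" using S qb \<eta>sq by simp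
  have "2 * (r\<^sup>2 * b / 2 + C1 * r ^ 3 * K ^ 3)\<^sup>2 + C1 * r ^ 3 * K ^ 3 \<le> 2 * q\<^sup>2 + C1 * \<eta> * q"
    using S S0 E1 by (intro add_mono mult_left_mono power_mono) auto
  also have "\<dots> = q * (2 * q + C1 * \<eta>)" by (simp add: power2_eq_square algebra_simps)
  also have "\<dots> \<le> q * \<epsilon>"
  proof (intro mult_left_mono q0)
    have "2 * q \<le> 2 * (\<eta>\<^sup>2 * C0 ^ 3)" using qb by simp
    also have "\<eta>\<^sup>2 \<le> \<eta> * (\<epsilon> / D)" unfolding power2_eq_square using \<eta>1 \<eta>0
      by (intro mult_left_mono) auto
    then have "\<eta>\<^sup>2 * C0 ^ 3 \<le> \<eta> * (\<epsilon> / D) * C0 ^ 3" using C0 by (intro mult_right_mono) auto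
    then have "2 * (\<eta>\<^sup>2 * C0 ^ 3) \<le> 2 * (\<eta> * (\<epsilon> / D) * C0 ^ 3)" by simp
    also have "\<eta> \<le> 1" using \<eta>1 D by (simp add: divide_le_eq_1 order_trans)
    then have "\<eta> * (\<epsilon> / D) \<le> 1 * (\<epsilon> / D)" using e D by (intro mult_right_mono) auto
    then have "2 * (\<eta> * (\<epsilon> / D) * C0 ^ 3) \<le> 2 * ((\<epsilon> / D) * C0 ^ 3)" using C0
      by (intro mult_left_mono mult_right_mono) auto
    also have "\<dots> \<le> \<epsilon> / 2" using D C0 e by (simp add: field_simps)
    finally have a1: "2 * q \<le> \<epsilon> / 2" .
    have "C1 * \<eta> \<le> C1 * (\<epsilon> / D)" using \<eta>1 C1 by (intro mult_left_mono) auto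
    also have "\<dots> \<le> \<epsilon> / 2" using D C1 e by (simp add: field_simps)
    finally show "2 * q + C1 * \<eta> \<le> \<epsilon>" using a1 by simp
  qed
  finally show "2 * (r\<^sup>2 * b / 2 + C1 * r ^ 3 * K ^ 3)\<^sup>2 + C1 * r ^ 3 * K ^ 3 \<le> \<epsilon> * r\<^sup>2 * b"
    unfolding q_def by (simp add: algebra_simps)
qed


context WV begin

lemma Hc0_holo: "g holomorphic_on S \<Longrightarrow> (\<lambda>\<tau>. Hc 0 (g \<tau>)) holomorphic_on S"
proof -
  assume g: "g holomorphic_on S"
  have "Hc 0 holomorphic_on UNIV"
    unfolding holomorphic_on_def
    using Hc_deriv field_differentiable_at_within field_differentiable_def by blast
  then show ?thesis using holomorphic_on_compose_gen[OF g, of "Hc 0" UNIV] by (simp add: o_def)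
qed

lemma Fc_holo: "Fc t holomorphic_on S"
proof -
  have ne: "H_fun a (complex_of_real t) * exp (\<tau> * complex_of_real (am t)) \<noteq> 0" for \<tau>
    using Mr0_pos[of t] by (simp add: H_real)
  have "(\<lambda>\<tau>. Hc 0 (complex_of_real t + \<tau>)) holomorphic_on S"
    by (intro Hc0_holo holomorphic_intros)
  then have "(\<lambda>\<tau>. Hc 0 (complex_of_real t + \<tau>) / (H_fun a (complex_of_real t) * exp (\<tau> * complex_of_real (am t)))) holomorphic_on S"
    using ne by (intro holomorphic_intros) auto
  then show ?thesis unfolding Fc_def[abs_def] H_eq by simp
qed

lemma Fc0: "Fc t 0 = 1"
  using Mr0_pos[of t] by (simp add: Fc_def H_real)

lemma local_at:
  assumes e: "\<epsilon> > 0" and K: "K > 0" and g: "good_at t (1 / K)"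
  shows "\<exists>L. continuous_on (cball 0 ((min \<epsilon> 1 / (2 * (48 * exp 2) + 4 * (4 * exp 2) ^ 3 + 2 * (4 * exp 2) + 1)) * (Re (B_fun a (complex_of_real t)) / K ^ 3))) L \<and>
            L holomorphic_on ball 0 ((min \<epsilon> 1 / (2 * (48 * exp 2) + 4 * (4 * exp 2) ^ 3 + 2 * (4 * exp 2) + 1)) * (Re (B_fun a (complex_of_real t)) / K ^ 3)) \<and> L 0 = 0 \<and>
            (\<forall>\<tau>. norm \<tau> \<le> (min \<epsilon> 1 / (2 * (48 * exp 2) + 4 * (4 * exp 2) ^ 3 + 2 * (4 * exp 2) + 1)) * (Re (B_fun a (complex_of_real t)) / K ^ 3) \<longrightarrow>
               exp (L \<tau>) = H_fun a (complex_of_real t + \<tau>) / H_fun a (complex_of_real t) \<and>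
               norm (L \<tau> - (\<tau> * A_fun a (complex_of_real t) + \<tau>\<^sup>2 * B_fun a (complex_of_real t) / 2))
                 \<le> \<epsilon> * (norm \<tau>)\<^sup>2 * Re (B_fun a (complex_of_real t)))"
proof -
  define C0 :: real where "C0 = 4 * exp 2"
  define C1 :: real where "C1 = 48 * exp 2"
  define b where "b = bv t"
  define \<rho> where "\<rho> = (min \<epsilon> 1 / (2 * C1 + 4 * C0 ^ 3 + 2 * C0 + 1)) * (b / K ^ 3)"
  have Bt: "B_fun a (complex_of_real t) = complex_of_real b"
    unfolding b_def bv_def B_real by simp
  have At: "A_fun a (complex_of_real t) = complex_of_real (am t)"
    unfolding am_def A_real by simp
  have C0: "C0 > 0" and C1: "C1 > 0" unfolding C0_def C1_def by auto
  have b0: "b \<ge> 0" unfolding b_def by (rule bv_nonneg)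
  have bK: "b \<le> C0 * K\<^sup>2" using bv_bound[OF g] K unfolding b_def C0_def by (simp add: field_simps)
  have est: "norm \<tau> \<le> 1 / (2 * K)"
      "(norm \<tau>)\<^sup>2 * b / 2 + C1 * norm \<tau> ^ 3 * K ^ 3 \<le> 1 / 2"
      "2 * ((norm \<tau>)\<^sup>2 * b / 2 + C1 * norm \<tau> ^ 3 * K ^ 3)\<^sup>2 + C1 * norm \<tau> ^ 3 * K ^ 3 \<le> \<epsilon> * (norm \<tau>)\<^sup>2 * b"
    if "norm \<tau> \<le> \<rho>" for \<tau>
    using num_est[OF C0 C1 e K b0 bK norm_ge_zero, of \<tau>] that unfolding \<rho>_def by auto
  have tay: "norm (Fc t \<tau> - 1 - \<tau>\<^sup>2 * complex_of_real b / 2) \<le> C1 * norm \<tau> ^ 3 * K ^ 3"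
    if "norm \<tau> \<le> \<rho>" for \<tau>
  proof -
    have "norm \<tau> \<le> (1 / K) / 2" using est(1)[OF that] by simp
    from Fc_taylor[OF g this] show ?thesis unfolding b_def C1_def using K by (simp add: power_divide)
  qed
  have wle: "norm (Fc t \<tau> - 1) \<le> (norm \<tau>)\<^sup>2 * b / 2 + C1 * norm \<tau> ^ 3 * K ^ 3"
    if "norm \<tau> \<le> \<rho>" for \<tau>
  proof -
    have "norm (Fc t \<tau> - 1) \<le> norm (\<tau>\<^sup>2 * complex_of_real b / 2) + norm (Fc t \<tau> - 1 - \<tau>\<^sup>2 * complex_of_real b / 2)"
      by (metis add.commute diff_add_cancel norm_triangle_ineq)
    also have "norm (\<tau>\<^sup>2 * complex_of_real b / 2) = (norm \<tau>)\<^sup>2 * b / 2" using b0 by (simp add: norm_mult norm_power)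
    finally show ?thesis using tay[OF that] by simp
  qed
  have whalf: "norm (Fc t \<tau> - 1) \<le> 1/2" if "norm \<tau> \<le> \<rho>" for \<tau>
    using wle[OF that] est(2)[OF that] by simp
  have notneg: "Fc t \<tau> \<notin> \<real>\<^sub>\<le>\<^sub>0" if "\<tau> \<in> cball 0 \<rho>" for \<tau>
  proof -
    have "norm \<tau> \<le> \<rho>" using that by simp
    then have "norm (Fc t \<tau> - 1) \<le> 1/2" by (rule whalf)
    then have "\<bar>Re (Fc t \<tau> - 1)\<bar> \<le> 1/2" using abs_Re_le_cmod order_trans by blast
    then have "Re (Fc t \<tau>) > 0" unfolding abs_le_iff by simp
    then show ?thesis by (auto simp: complex_nonpos_Reals_iff)
  qed
  define L where "L \<tau> = \<tau> * complex_of_real (am t) + ln (Fc t \<tau>)" for \<tau>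
  have holo: "L holomorphic_on cball 0 \<rho>"
    unfolding L_def[abs_def]
    by (intro holomorphic_intros holomorphic_on_Ln' notneg Fc_holo)
  have "continuous_on (cball 0 \<rho>) L" by (rule holomorphic_on_imp_continuous_on[OF holo])
  moreover have "L holomorphic_on ball 0 \<rho>" by (rule holomorphic_on_subset[OF holo ball_subset_cball])
  moreover have "L 0 = 0" unfolding L_def by (simp add: Fc0)
  moreover have "exp (L \<tau>) = H_fun a (complex_of_real t + \<tau>) / H_fun a (complex_of_real t) \<and>
               norm (L \<tau> - (\<tau> * A_fun a (complex_of_real t) + \<tau>\<^sup>2 * B_fun a (complex_of_real t) / 2))
                 \<le> \<epsilon> * (norm \<tau>)\<^sup>2 * Re (B_fun a (complex_of_real t))" if \<tau>: "norm \<tau> \<le> \<rho>" for \<tau>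
  proof
    have Fne: "Fc t \<tau> \<noteq> 0" using notneg[of \<tau>] \<tau> by auto
    have Hne: "H_fun a (complex_of_real t) \<noteq> 0" using Mr0_pos[of t] by (simp add: H_real)
    show "exp (L \<tau>) = H_fun a (complex_of_real t + \<tau>) / H_fun a (complex_of_real t)"
      unfolding L_def using Fne Hne by (simp add: exp_add Fc_def field_simps)
    define w where "w = Fc t \<tau> - 1"
    define E1 where "E1 = C1 * norm \<tau> ^ 3 * K ^ 3"
    define S where "S = (norm \<tau>)\<^sup>2 * b / 2 + E1"
    have wS: "norm w \<le> S" unfolding w_def S_def E1_def by (rule wle[OF \<tau>])
    have S2: "S \<le> 1/2" unfolding S_def E1_def by (rule est(2)[OF \<tau>])
    have S3: "2 * S\<^sup>2 + E1 \<le> \<epsilon> * (norm \<tau>)\<^sup>2 * b" unfolding S_def E1_def by (rule est(3)[OF \<tau>])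
    have lnw: "norm (ln (1 + w) - w) \<le> 2 * (norm w)\<^sup>2"
    proof -
      have "norm w < 1" using wS S2 by simp
      then have "norm (ln (1 + w) - w) \<le> norm w ^ 2 / (1 - norm w)" by (rule Ln_approx_linear)
      also have "\<dots> \<le> norm w ^ 2 / (1/2)" using wS S2
        by (intro divide_left_mono) auto
      finally show ?thesis by simp
    qed
    have "L \<tau> - (\<tau> * A_fun a (complex_of_real t) + \<tau>\<^sup>2 * B_fun a (complex_of_real t) / 2)
        = (ln (1 + w) - w) + (Fc t \<tau> - 1 - \<tau>\<^sup>2 * complex_of_real b / 2)"
      unfolding L_def At Bt w_def by (simp add: algebra_simps)
    then have "norm (L \<tau> - (\<tau> * A_fun a (complex_of_real t) + \<tau>\<^sup>2 * B_fun a (complex_of_real t) / 2))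
        \<le> norm (ln (1 + w) - w) + norm (Fc t \<tau> - 1 - \<tau>\<^sup>2 * complex_of_real b / 2)"
      by (simp add: norm_triangle_ineq)
    also have "\<dots> \<le> 2 * S\<^sup>2 + E1"
    proof (rule add_mono)
      have "2 * (norm w)\<^sup>2 \<le> 2 * S\<^sup>2" using wS by (intro mult_left_mono power_mono) auto
      then show "norm (ln (1 + w) - w) \<le> 2 * S\<^sup>2" using lnw by simp
      show "norm (Fc t \<tau> - 1 - \<tau>\<^sup>2 * complex_of_real b / 2) \<le> E1" unfolding E1_def by (rule tay[OF \<tau>])
    qed
    also have "\<dots> \<le> \<epsilon> * (norm \<tau>)\<^sup>2 * Re (B_fun a (complex_of_real t))" using S3 Bt by simp
    finally show "norm (L \<tau> - (\<tau> * A_fun a (complex_of_real t) + \<tau>\<^sup>2 * B_fun a (complex_of_real t) / 2))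
                 \<le> \<epsilon> * (norm \<tau>)\<^sup>2 * Re (B_fun a (complex_of_real t))" .
  qed
  ultimately show ?thesis unfolding \<rho>_def C0_def C1_def Bt by (intro exI[of _ L]) auto
qed

end


context WV begin

lemma ci_props:
  assumes r: "r > 0"
  shows "(a (central_index a r))\<^sup>2 * r ^ (central_index a r) = max_term a r"
    and "\<And>n. (a n)\<^sup>2 * r ^ n \<le> max_term a r"
proof -
  define f where "f n = (a n)\<^sup>2 * r ^ n" for n
  obtain m where m: "a m \<noteq> 0" using transc not_finite_existsD by auto
  have fm: "f m > 0" unfolding f_def using m r by simp
  have "f \<longlonglongrightarrow> 0" unfolding f_def by (rule summable_LIMSEQ_zero[OF summable_real])
  then obtain M where M: "\<And>n. n \<ge> M \<Longrightarrow> f n < f m"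
    using fm by (metis (no_types, lifting) eventually_sequentially order_tendstoD(2))
  have mM: "m < M" using M[of m] by (meson linorder_not_le order_less_irrefl)
  define \<mu> where "\<mu> = Max (f ` {..M})"
  have \<mu>in: "\<mu> \<in> f ` {..M}" unfolding \<mu>_def by (intro Max_in) auto
  have \<mu>ge: "f n \<le> \<mu>" for n
  proof (cases "n \<le> M")
    case True then show ?thesis unfolding \<mu>_def by (intro Max_ge) auto
  next
    case False
    then have "f n < f m" using M by simp
    also have "f m \<le> \<mu>" unfolding \<mu>_def using mM by (intro Max_ge) auto
    finally show ?thesis by simp
  qed
  have mt: "max_term a r = \<mu>"
    unfolding max_term_def f_def[symmetric] using \<mu>in \<mu>ge by (intro cSup_eq_maximum) auto
  have fin: "finite {n. f n = \<mu>}"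
  proof (rule finite_subset[of _ "{..M}"])
    show "{n. f n = \<mu>} \<subseteq> {..M}"
    proof
      fix n assume "n \<in> {n. f n = \<mu>}"
      then have "f n = \<mu>" by simp
      moreover have "f m \<le> \<mu>" by (rule \<mu>ge)
      ultimately show "n \<in> {..M}" using M[of n] by force
    qed
  qed auto
  have ne: "{n. f n = \<mu>} \<noteq> {}" using \<mu>in by auto
  have ci: "central_index a r = Max {n. f n = \<mu>}" unfolding central_index_def f_def mt by simp
  have "central_index a r \<in> {n. f n = \<mu>}" unfolding ci by (rule Max_in[OF fin ne])
  then show "(a (central_index a r))\<^sup>2 * r ^ (central_index a r) = max_term a r"
    using mt unfolding f_def by simp
  show "\<And>n. (a n)\<^sup>2 * r ^ n \<le> max_term a r" using \<mu>ge mt unfolding f_def by simp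
qed

lemma one_minus_exp_ge: assumes "0 < (h::real)" "h \<le> 1" shows "1 - exp (- h) \<ge> h / 2"
proof -
  have "1 + h \<le> exp h" by simp
  then have "exp (-h) \<le> 1 / (1 + h)" using assms by (simp add: exp_minus divide_simps)
  also have "1 / (1 + h) \<le> 1 - h / 2" using assms by (simp add: field_simps power2_eq_square mult_left_le_one_le)
  finally show ?thesis by simp
qed

lemma ci_lower:
  assumes w: "0 < w" "w \<le> 2"
  shows "real (central_index a (exp s)) \<ge> am (s - w) / 2 - ln (4 / w) / w"
proof -
  define N where "N = central_index a (exp s)"
  define \<mu> where "\<mu> = max_term a (exp s)"
  have N\<mu>: "(a N)\<^sup>2 * exp s ^ N = \<mu>" and le\<mu>: "\<And>n. (a n)\<^sup>2 * exp s ^ n \<le> \<mu>"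
    unfolding N_def \<mu>_def using ci_props[of "exp s"] by auto
  have \<mu>pos: "\<mu> > 0"
  proof -
    obtain m where "a m \<noteq> 0" using transc not_finite_existsD by auto
    then have "0 < (a m)\<^sup>2 * exp s ^ m" by simp
    then show ?thesis using le\<mu>[of m] by simp
  qed
  define h where "h = w / 2"
  have h: "0 < h" "h \<le> 1" unfolding h_def using w by auto
  have q: "norm (exp (- h)) < 1" using h by simp
  have i: "Mr 0 (s - h) \<le> \<mu> / (1 - exp (- h))"
  proof -
    have "Mr 0 (s - h) = (\<Sum>n. (a n)\<^sup>2 * exp s ^ n * exp (- h) ^ n)"
      unfolding Mr_def by (simp add: exp_diff power_divide exp_minus divide_inverse power_mult_distrib mult.assoc)
    also have "\<dots> \<le> (\<Sum>n. \<mu> * exp (- h) ^ n)"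
    proof (rule suminf_le)
      show "(a n)\<^sup>2 * exp s ^ n * exp (- h) ^ n \<le> \<mu> * exp (- h) ^ n" for n
        using le\<mu>[of n] by (intro mult_right_mono) auto
      show "summable (\<lambda>n. (a n)\<^sup>2 * exp s ^ n * exp (- h) ^ n)"
        using summable_real[of "exp s * exp (-h)"] by (simp add: power_mult_distrib mult.assoc)
      show "summable (\<lambda>n. \<mu> * exp (- h) ^ n)"
        using geometric_sums[OF q] by (intro summable_mult) (auto simp: sums_iff)
    qed
    also have "\<dots> = \<mu> / (1 - exp (- h))"
      using sums_mult[OF geometric_sums[OF q], of \<mu>] by (simp add: sums_iff)
    finally show ?thesis .
  qed
  have ii: "Mr 0 (s - w) \<ge> \<mu> * exp (- (real N * w))"
  proof -
    have "(a N)\<^sup>2 * exp (s - w) ^ N \<le> Mr 0 (s - w)" by (rule term_le_Mr0)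
    moreover have "(a N)\<^sup>2 * exp (s - w) ^ N = \<mu> * exp (- (real N * w))"
    proof -
      have e1: "exp (s - w) ^ N = exp (real N * (s - w))" by (rule exp_of_nat_mult[symmetric])
      have e2: "exp (real N * (s - w)) = exp (real N * s) * exp (- (real N * w))" by (simp add: algebra_simps flip: exp_add)
      have e3: "exp (real N * s) = exp s ^ N" by (rule exp_of_nat_mult)
      have "exp (s - w) ^ N = exp s ^ N * exp (- (real N * w))" unfolding e1 e2 e3 ..
      then show ?thesis using N\<mu> by (simp add: mult.assoc)
    qed
    ultimately show ?thesis by simp
  qed
  have d: "1 - exp (- h) > 0" using h by simp
  have psi1: "psi (s - h) \<le> ln \<mu> - ln (1 - exp (- h))"
  proof -
    have "psi (s - h) \<le> ln (\<mu> / (1 - exp (- h)))" unfolding psi_def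
      using i Mr0_pos[of "s - h"] \<mu>pos d by simp
    then show ?thesis using \<mu>pos d by (simp add: ln_div)
  qed
  have psi2: "psi (s - w) \<ge> ln \<mu> - real N * w"
  proof -
    have "ln (\<mu> * exp (- (real N * w))) \<le> psi (s - w)" unfolding psi_def
      using ii Mr0_pos[of "s - w"] \<mu>pos by simp
    then show ?thesis using \<mu>pos by (simp add: ln_mult)
  qed
  have mvt: "psi (s - h) - psi (s - w) \<ge> (s - h - (s - w)) * am (s - w)"
    by (rule psi_mvt_lower) (use h_def w in simp)
  have lnb: "ln (1 - exp (- h)) \<ge> - ln (4 / w)"
  proof -
    have "ln (h / 2) \<le> ln (1 - exp (- h))" using one_minus_exp_ge[OF h] h d by simp
    moreover have "ln (h / 2) = - ln (4 / w)" unfolding h_def using w by (simp add: ln_div)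
    ultimately show ?thesis by simp
  qed
  have "(w / 2) * am (s - w) \<le> real N * w + ln (4 / w)"
    using mvt psi1 psi2 lnb unfolding h_def by simp
  then have "am (s - w) / 2 - ln (4 / w) / w \<le> real N" using w by (simp add: field_simps)
  then show ?thesis unfolding N_def .
qed

end


lemma exp_neg_le: assumes "0 < (y::real)" "y \<le> 1" shows "exp (- y) \<le> 1 - y / 2"
proof -
  have "1 + y \<le> exp y" by simp
  then have "exp (-y) \<le> 1 / (1 + y)" using assms by (simp add: exp_minus divide_simps)
  also have "1 / (1 + y) \<le> 1 - y / 2" using assms by (simp add: field_simps power2_eq_square mult_left_le_one_le)
  finally show ?thesis by simp
qed

lemma ln_one_plus_ge: assumes "0 \<le> (x::real)" "x \<le> 1" shows "ln (1 + x) \<ge> x / 2"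
proof -
  have "ln (1 / (1 + x)) \<le> 1 / (1 + x) - 1" using assms by (intro ln_le_minus_one) auto
  then have "- ln (1 + x) \<le> - x / (1 + x)" using assms by (simp add: ln_div field_simps)
  then have "ln (1 + x) \<ge> x / (1 + x)" by simp
  moreover have "x / (1 + x) \<ge> x / 2" using assms by (intro divide_left_mono) auto
  ultimately show ?thesis by linarith
qed

lemma pot_right:
  fixes A b \<theta> :: real
  assumes th: "0 < \<theta>" "\<theta> < 1" and A: "A \<ge> 1" and b: "b \<ge> A + A powr ((1 + \<theta>) / 2)"
  shows "A powr (- \<theta>) - b powr (- \<theta>) \<ge> \<theta> / 4 * A powr (- ((1 + \<theta>) / 2))"
proof -
  define x where "x = A powr ((1 + \<theta>) / 2 - 1)"
  have x0: "x > 0" unfolding x_def using A by simp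
  have x1: "x \<le> 1"
  proof -
    have "x \<le> A powr 0" unfolding x_def using A th by (intro powr_mono) auto
    then show ?thesis using A by simp
  qed
  have Ax: "A * x = A powr ((1 + \<theta>) / 2)"
  proof -
    have "A powr ((1 + \<theta>) / 2) = A powr (1 + ((1 + \<theta>) / 2 - 1))" by (simp only: add.commute[of 1] diff_add_cancel)
    also have "\<dots> = A powr 1 * x" unfolding x_def by (rule powr_add)
    finally show ?thesis using A by simp
  qed
  have Ax2: "A powr (- \<theta>) * x = A powr (- ((1 + \<theta>) / 2))"
  proof -
    have e: "- \<theta> + ((1 + \<theta>) / 2 - 1) = - ((1 + \<theta>) / 2)" by (simp add: field_simps)
    show ?thesis unfolding x_def powr_add[symmetric] e ..
  qed
  have bA: "A * (1 + x) \<le> b" using b Ax by (simp add: algebra_simps)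
  have "b powr (- \<theta>) \<le> (A * (1 + x)) powr (- \<theta>)"
    by (rule powr_mono2') (use th A x0 bA in auto)
  also have "\<dots> = A powr (- \<theta>) * (1 + x) powr (- \<theta>)" using A x0 by (simp add: powr_mult)
  also have "(1 + x) powr (- \<theta>) \<le> 1 - \<theta> * x / 4"
  proof -
    have "(1 + x) powr (- \<theta>) = exp (- (\<theta> * ln (1 + x)))" using x0 by (simp add: powr_def)
    also have "\<dots> \<le> exp (- (\<theta> * x / 2))"
      using ln_one_plus_ge[of x] x0 x1 th by (simp add: mult_left_mono)
    also have "\<dots> \<le> 1 - (\<theta> * x / 2) / 2"
    proof (rule exp_neg_le)
      have "\<theta> * x \<le> 1 * 1" using th x0 x1 by (intro mult_mono) auto
      then show "\<theta> * x / 2 \<le> 1" by simp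
    qed (use th x0 in simp)
    finally show ?thesis by simp
  qed
  then have "A powr (- \<theta>) * (1 + x) powr (- \<theta>) \<le> A powr (- \<theta>) * (1 - \<theta> * x / 4)"
    by (intro mult_left_mono) auto
  finally have "b powr (- \<theta>) \<le> A powr (- \<theta>) - \<theta> / 4 * (A powr (- \<theta>) * x)" by (simp add: algebra_simps)
  then show ?thesis unfolding Ax2 by simp
qed

lemma pot_left:
  fixes A c \<theta> :: real
  assumes th: "0 < \<theta>" "\<theta> < 1" and A: "A \<ge> 1" and c0: "c > 0" and c: "c \<le> A - A powr ((1 + \<theta>) / 2)"
  shows "c powr (- \<theta>) - A powr (- \<theta>) \<ge> \<theta> * A powr (- ((1 + \<theta>) / 2))"
proof -
  define x where "x = A powr ((1 + \<theta>) / 2 - 1)"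
  have x0: "x > 0" unfolding x_def using A by simp
  have Ax: "A * x = A powr ((1 + \<theta>) / 2)"
  proof -
    have "A powr ((1 + \<theta>) / 2) = A powr (1 + ((1 + \<theta>) / 2 - 1))" by (simp only: add.commute[of 1] diff_add_cancel)
    also have "\<dots> = A powr 1 * x" unfolding x_def by (rule powr_add)
    finally show ?thesis using A by simp
  qed
  have Ax2: "A powr (- \<theta>) * x = A powr (- ((1 + \<theta>) / 2))"
  proof -
    have e: "- \<theta> + ((1 + \<theta>) / 2 - 1) = - ((1 + \<theta>) / 2)" by (simp add: field_simps)
    show ?thesis unfolding x_def powr_add[symmetric] e ..
  qed
  have cA: "c \<le> A * (1 - x)" using c Ax by (simp add: algebra_simps)
  have x1: "x < 1" using cA c0 A by (smt (verit, best) mult_nonneg_nonpos)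
  have "(A * (1 - x)) powr (- \<theta>) \<le> c powr (- \<theta>)"
    by (rule powr_mono2') (use th c0 cA in auto)
  moreover have "(A * (1 - x)) powr (- \<theta>) = A powr (- \<theta>) * (1 - x) powr (- \<theta>)" using A x1 by (simp add: powr_mult)
  moreover have "(1 - x) powr (- \<theta>) \<ge> 1 + \<theta> * x"
  proof -
    have l: "ln (1 - x) \<le> - x" using ln_le_minus_one[of "1 - x"] x1 by simp
    have "(1 - x) powr (- \<theta>) = exp (- (\<theta> * ln (1 - x)))" using x1 by (simp add: powr_def)
    also have "\<dots> \<ge> 1 + (- (\<theta> * ln (1 - x)))" by (rule exp_ge_add_one_self)
    moreover have "\<theta> * x \<le> \<theta> * (- ln (1 - x))" using l th by (intro mult_left_mono) auto
    ultimately show ?thesis by linarith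
  qed
  ultimately have "c powr (- \<theta>) \<ge> A powr (- \<theta>) * (1 + \<theta> * x)"
    by (smt (verit, best) mult_left_mono powr_ge_zero)
  then have "c powr (- \<theta>) - A powr (- \<theta>) \<ge> \<theta> * (A powr (- \<theta>) * x)" by (simp add: algebra_simps)
  then show ?thesis unfolding Ax2 .
qed



locale WVB = WV +
  fixes \<theta> s1 :: real
  assumes th: "0 < \<theta>" "\<theta> < 1"
    and big: "\<And>s. s \<ge> s1 - 1 \<Longrightarrow> am s \<ge> 4"
begin

definition uu :: "real \<Rightarrow> real" where "uu s = am s powr (- ((1 + \<theta>) / 2))"

definition Fb :: "real set" where
  "Fb = {s. s1 \<le> s \<and> 2 * am s powr ((1 + \<theta>) / 2) \<le> am (s + uu s) - am (s - uu s)}"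

definition nxt :: "real \<Rightarrow> real option" where
  "nxt x = (if Fb \<inter> {x..} = {} then None else Some (Inf (Fb \<inter> {x..})))"

primrec sq :: "nat \<Rightarrow> real option" where
  "sq 0 = nxt s1"
| "sq (Suc k) = (case sq k of None \<Rightarrow> None | Some r \<Rightarrow> nxt (r + 2 * uu r))"

lemma uu_pos: assumes "s \<ge> s1 - 1" shows "0 < uu s" "uu s \<le> 1/2"
proof -
  have A: "am s \<ge> 4" by (rule big[OF assms])
  show "0 < uu s" unfolding uu_def using A by simp
  have "uu s \<le> 4 powr (- ((1 + \<theta>) / 2))" unfolding uu_def
    by (rule powr_mono2') (use A th in auto)
  also have "\<dots> \<le> 4 powr (- (1 / 2))" by (rule powr_mono) (use th in auto)
  also have "4 powr (- (1 / 2)) = (1/2::real)"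
  proof -
    have "(4::real) powr (1/2) = sqrt 4" by (simp add: powr_half_sqrt)
    also have "sqrt 4 = (2::real)" by (simp add: real_sqrt_eq_iff power2_eq_square[symmetric])
    finally show ?thesis by (simp add: powr_minus)
  qed
  finally show "uu s \<le> 1/2" .
qed

lemma uu_anti: assumes "s1 - 1 \<le> x" "x \<le> y" shows "uu y \<le> uu x"
  unfolding uu_def
proof (rule powr_mono2')
  show "am x \<le> am y" using assms am_mono by simp
  show "0 < am x" using big[OF assms(1)] by simp
qed (use th in auto)

lemma Phi_le1: assumes "s \<ge> s1 - 1" shows "am s powr (- \<theta>) \<le> 1"
proof -
  have "am s powr (- \<theta>) \<le> 1 powr (- \<theta>)"
    by (rule powr_mono2') (use big[OF assms] th in auto)
  then show ?thesis by simp
qed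

lemma Phi_anti: assumes "s1 - 1 \<le> x" "x \<le> y" shows "am y powr (- \<theta>) \<le> am x powr (- \<theta>)"
proof (rule powr_mono2')
  show "am x \<le> am y" using assms am_mono by simp
  show "0 < am x" using big[OF assms(1)] by simp
qed (use th in auto)

lemma Fb_closed: "closed Fb"
proof -
  have cu: "continuous_on {s1..} uu"
    unfolding uu_def
  proof (intro continuous_intros am_cont ballI)
    fix s assume "s \<in> {s1..}"
    then have "am s \<ge> 4" using big[of s] by simp
    then show "am s \<noteq> 0" by simp
  qed
  have "continuous_on {s1..} (\<lambda>s. am (s + uu s) - am (s - uu s) - 2 * am s powr ((1 + \<theta>) / 2))"
  proof (intro continuous_intros)
    show "continuous_on {s1..} (\<lambda>s. am (s + uu s))"
      by (rule continuous_on_compose2[OF am_cont[of UNIV]]) (intro continuous_intros cu, auto)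
    show "continuous_on {s1..} (\<lambda>s. am (s - uu s))"
      by (rule continuous_on_compose2[OF am_cont[of UNIV]]) (intro continuous_intros cu, auto)
    show "continuous_on {s1..} am" by (rule am_cont)
    show "\<forall>x\<in>{s1..}. am x \<noteq> 0"
    proof
      fix x assume "x \<in> {s1..}"
      then have "am x \<ge> 4" using big[of x] by simp
      then show "am x \<noteq> 0" by simp
    qed
  qed
  from continuous_closed_preimage[OF this closed_atLeast closed_atLeast[of 0]]
  have "closed ({s1..} \<inter> (\<lambda>s. am (s + uu s) - am (s - uu s) - 2 * am s powr ((1 + \<theta>) / 2)) -` {0..})" .
  moreover have "{s1..} \<inter> (\<lambda>s. am (s + uu s) - am (s - uu s) - 2 * am s powr ((1 + \<theta>) / 2)) -` {0..} = Fb"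
    unfolding Fb_def by auto
  ultimately show ?thesis by simp
qed

lemma nxt_Some: assumes "nxt x = Some r" shows "r \<in> Fb" "x \<le> r" "\<And>y. y \<in> Fb \<Longrightarrow> x \<le> y \<Longrightarrow> r \<le> y"
proof -
  have ne: "Fb \<inter> {x..} \<noteq> {}" and r: "r = Inf (Fb \<inter> {x..})"
    using assms unfolding nxt_def by (auto split: if_splits)
  have cl: "closed (Fb \<inter> {x..})" using Fb_closed by (intro closed_Int) auto
  have bb: "bdd_below (Fb \<inter> {x..})" by (rule bdd_belowI[of _ x]) auto
  have "r \<in> Fb \<inter> {x..}" unfolding r by (rule closed_contains_Inf[OF ne bb cl])
  then show "r \<in> Fb" "x \<le> r" by auto
  show "\<And>y. y \<in> Fb \<Longrightarrow> x \<le> y \<Longrightarrow> r \<le> y" unfolding r using bb by (intro cInf_lower) auto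
qed

lemma nxt_None: assumes "nxt x = None" "y \<in> Fb" shows "y < x"
  using assms unfolding nxt_def by (auto split: if_splits simp: not_le)

lemma sq_in: "sq k = Some r \<Longrightarrow> r \<in> Fb"
  by (cases k) (auto split: option.splits dest: nxt_Some)

lemma Fb_ge: "r \<in> Fb \<Longrightarrow> r \<ge> s1"
  unfolding Fb_def by auto

lemma sq_Suc: assumes "sq (Suc k) = Some r'" shows "\<exists>r. sq k = Some r \<and> r + 2 * uu r \<le> r'"
  using assms by (auto split: option.splits dest: nxt_Some)

lemma cover: assumes s: "s \<in> Fb" shows "\<exists>k r. sq k = Some r \<and> r \<le> s \<and> s \<le> r + 2 * uu r"
proof (rule ccontr)
  assume nc: "\<not> ?thesis"
  have s1s: "s \<ge> s1" using s by (rule Fb_ge)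
  have us: "uu s > 0" using uu_pos[of s] s1s by simp
  have claim: "\<exists>r. sq k = Some r \<and> r \<le> s \<and> r \<ge> s1 + real k * uu s" for k
  proof (induction k)
    case 0
    have "Fb \<inter> {s1..} \<noteq> {}" using s s1s by auto
    then obtain r where r: "nxt s1 = Some r" unfolding nxt_def by auto
    then show ?case using nxt_Some[OF r] s s1s by auto
  next
    case (Suc k)
    then obtain r where r: "sq k = Some r" "r \<le> s" "r \<ge> s1 + real k * uu s" by blast
    have "s > r + 2 * uu r" using nc r by force
    then have "Fb \<inter> {r + 2 * uu r..} \<noteq> {}" using s by auto
    then obtain r' where r': "nxt (r + 2 * uu r) = Some r'" unfolding nxt_def by auto
    have sqS: "sq (Suc k) = Some r'" using r r' by simp
    have rin: "r \<in> Fb" using sq_in[OF r(1)] .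
    have "r' \<le> s" using nxt_Some(3)[OF r' s] \<open>s > r + 2 * uu r\<close> by simp
    moreover have "r' \<ge> r + 2 * uu r" using nxt_Some(2)[OF r'] .
    moreover have "uu s \<le> uu r" using uu_anti[of r s] Fb_ge[OF rin] r by simp
    moreover have "uu r > 0" using uu_pos[of r] Fb_ge[OF rin] by simp
    ultimately show ?case using sqS r(3) by (intro exI[of _ r']) (auto simp: algebra_simps)
  qed
  define k where "k = nat \<lceil>(s - s1) / uu s\<rceil> + 1"
  obtain r where r: "sq k = Some r" "r \<le> s" "r \<ge> s1 + real k * uu s" using claim by blast
  have "real k > (s - s1) / uu s" unfolding k_def by linarith
  then have "real k * uu s > s - s1" using us by (simp add: field_simps)
  then show False using r by simp
qed

lemma potential: assumes r: "r \<in> Fb"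
  shows "uu r \<le> 4 / \<theta> * (am (r - uu r) powr (- \<theta>) - am (r + uu r) powr (- \<theta>))"
proof -
  define A where "A = am r"
  define b where "b = am (r + uu r)"
  define c where "c = am (r - uu r)"
  define \<beta> where "\<beta> = (1 + \<theta>) / 2"
  have rs: "r \<ge> s1" using Fb_ge[OF r] .
  have u: "0 < uu r" "uu r \<le> 1/2" using uu_pos[of r] rs by auto
  have A1: "A \<ge> 1" unfolding A_def using big[of r] rs by simp
  have c4: "c \<ge> 4" unfolding c_def using big[of "r - uu r"] rs u by simp
  have cA: "c \<le> A" unfolding c_def A_def using u by (intro am_mono) simp
  have Ab: "A \<le> b" unfolding b_def A_def using u by (intro am_mono) simp
  have cond: "2 * A powr \<beta> \<le> b - c" using r unfolding Fb_def A_def b_def c_def \<beta>_def by simp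
  have uA: "uu r = A powr (- \<beta>)" unfolding uu_def A_def \<beta>_def ..
  have m1: "A powr (- \<theta>) \<le> c powr (- \<theta>)" by (rule powr_mono2') (use th c4 cA in auto)
  have m2: "b powr (- \<theta>) \<le> A powr (- \<theta>)" by (rule powr_mono2') (use th A1 Ab in auto)
  have "c powr (- \<theta>) - b powr (- \<theta>) \<ge> \<theta> / 4 * A powr (- \<beta>)"
  proof (cases "b \<ge> A + A powr \<beta>")
    case True
    have "A powr (- \<theta>) - b powr (- \<theta>) \<ge> \<theta> / 4 * A powr (- ((1 + \<theta>) / 2))"
      by (rule pot_right[OF th A1]) (use True \<beta>_def in simp)
    then show ?thesis using m1 unfolding \<beta>_def by simp
  next
    case False
    then have "c \<le> A - A powr \<beta>" using cond by simp
    then have "c powr (- \<theta>) - A powr (- \<theta>) \<ge> \<theta> * A powr (- ((1 + \<theta>) / 2))"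
      by (intro pot_left[OF th A1]) (use c4 \<beta>_def in auto)
    moreover have "\<theta> / 4 * A powr (- \<beta>) \<le> \<theta> * A powr (- \<beta>)" using th by simp
    ultimately show ?thesis using m2 unfolding \<beta>_def by simp
  qed
  then have "\<theta> / 4 * uu r \<le> c powr (- \<theta>) - b powr (- \<theta>)" using uA by simp
  then show ?thesis unfolding b_def c_def using th by (simp add: field_simps)
qed

definition gk :: "nat \<Rightarrow> real" where "gk k = (case sq k of None \<Rightarrow> 0 | Some r \<Rightarrow> uu r)"
definition tlk :: "nat \<Rightarrow> real" where "tlk k = (case sq k of None \<Rightarrow> 0 | Some r \<Rightarrow> am (r + uu r) powr (- \<theta>))"

lemma four_theta: "t \<ge> 0 \<Longrightarrow> 4 / \<theta> * (1 - t) \<le> 4 / \<theta>"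
proof -
  assume "t \<ge> 0"
  then have "4 / \<theta> * (1 - t) \<le> 4 / \<theta> * 1" using th by (intro mult_left_mono) auto
  then show ?thesis by simp
qed

lemma tlk_nonneg: "tlk k \<ge> 0" unfolding tlk_def by (auto split: option.splits)

lemma partial_bound: "(\<Sum>k\<le>n. gk k) \<le> 4 / \<theta> * (1 - tlk n)"
proof (induction n)
  case 0
  show ?case
  proof (cases "sq 0")
    case None then show ?thesis unfolding gk_def tlk_def using th by simp
  next
    case (Some r)
    have rin: "r \<in> Fb" using sq_in[OF Some] .
    have rs: "r \<ge> s1" using Fb_ge[OF rin] .
    have "am (r - uu r) powr (- \<theta>) \<le> 1" using uu_pos[of r] rs by (intro Phi_le1) simp
    moreover have "gk 0 = uu r" "tlk 0 = am (r + uu r) powr (- \<theta>)"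
      unfolding gk_def tlk_def using Some by (simp_all del: sq.simps)
    ultimately show ?thesis using potential[OF rin] th
      by (simp add: field_simps)
  qed
next
  case (Suc n)
  show ?case
  proof (cases "sq (Suc n)")
    case None
    then have "gk (Suc n) = 0" "tlk (Suc n) = 0" unfolding gk_def tlk_def by auto
    then show ?thesis using Suc.IH four_theta[OF tlk_nonneg[of n]] by simp
  next
    case (Some r')
    obtain r where r: "sq n = Some r" "r + 2 * uu r \<le> r'" using sq_Suc[OF Some] by blast
    have rin: "r \<in> Fb" using sq_in[OF r(1)] .
    have r'in: "r' \<in> Fb" using sq_in[OF Some] .
    have rs: "r \<ge> s1" using Fb_ge[OF rin] .
    have ur: "0 < uu r" using uu_pos[of r] rs by simp
    have "uu r' \<le> uu r" using uu_anti[of r r'] rs r ur by simp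
    then have "r + uu r \<le> r' - uu r'" using r by simp
    then have ph: "am (r' - uu r') powr (- \<theta>) \<le> am (r + uu r) powr (- \<theta>)"
      using rs ur by (intro Phi_anti) auto
    have "(\<Sum>k\<le>Suc n. gk k) = (\<Sum>k\<le>n. gk k) + uu r'" unfolding gk_def using Some by simp
    also have "\<dots> \<le> 4 / \<theta> * (1 - tlk n) + 4 / \<theta> * (am (r' - uu r') powr (- \<theta>) - am (r' + uu r') powr (- \<theta>))"
      using Suc.IH potential[OF r'in] by simp
    also have "\<dots> \<le> 4 / \<theta> * (1 - tlk n) + 4 / \<theta> * (tlk n - am (r' + uu r') powr (- \<theta>))"
      using ph th unfolding tlk_def r(1) by (intro add_left_mono mult_left_mono) auto
    also have "\<dots> = 4 / \<theta> * (1 - tlk (Suc n))" unfolding tlk_def using Some by (simp add: algebra_simps)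
    finally show ?thesis .
  qed
qed

lemma gk_nonneg: "gk k \<ge> 0"
proof (cases "sq k")
  case (Some r)
  have "r \<ge> s1" using Fb_ge[OF sq_in[OF Some]] .
  then have "uu r > 0" using uu_pos[of r] by simp
  then show ?thesis unfolding gk_def using Some by (simp del: sq.simps)
qed (simp add: gk_def)

lemma partial_bound': "(\<Sum>k<n. gk k) \<le> 4 / \<theta>"
proof (cases n)
  case 0 then show ?thesis using th by simp
next
  case (Suc m)
  have "(\<Sum>k<n. gk k) = (\<Sum>k\<le>m. gk k)" unfolding Suc lessThan_Suc_atMost ..
  also have "\<dots> \<le> 4 / \<theta> * (1 - tlk m)" by (rule partial_bound)
  also have "\<dots> \<le> 4 / \<theta>" by (rule four_theta[OF tlk_nonneg])
  finally show ?thesis .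
qed

end


context WVB begin

definition Nset :: "real set" where "Nset = {r. 0 < r \<and> ln r \<notin> Fb}"

lemma Nset_sub: "Nset \<subseteq> {0<..}" unfolding Nset_def by auto

lemma Nset_open: "open Nset"
proof -
  have c: "continuous_on {0<..} (ln :: real \<Rightarrow> real)" by (intro continuous_intros) auto
  have "open (ln -` (- Fb) \<inter> {0<..})"
    using c Fb_closed unfolding continuous_on_open_vimage[OF open_greaterThan] by (auto simp: open_Compl)
  moreover have "ln -` (- Fb) \<inter> {0<..} = Nset" unfolding Nset_def by auto
  ultimately show ?thesis by simp
qed

lemma Nset_sets: "Nset \<in> sets lborel"
  using Nset_open by simp

definition fk :: "nat \<Rightarrow> real \<Rightarrow> ennreal" where
  "fk k t = (case sq k of None \<Rightarrow> 0 | Some r \<Rightarrow> ennreal (exp (- r)) * indicator {exp r .. exp (r + 2 * uu r)} t)"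

lemma fk_meas: "fk k \<in> borel_measurable lborel"
proof (cases "sq k")
  case None then show ?thesis unfolding fk_def[abs_def] by simp
next
  case (Some r)
  have "(\<lambda>t. ennreal (exp (- r)) * indicator {exp r .. exp (r + 2 * uu r)} t) \<in> borel_measurable lborel"
    by measurable
  then show ?thesis unfolding fk_def[abs_def] using Some by (simp del: sq.simps)
qed

lemma exp_le_lin: assumes "0 \<le> x" "x \<le> 1" shows "exp x - 1 \<le> 2 * (x::real)"
proof -
  have "exp x \<le> 1 + x + x\<^sup>2" by (rule exp_bound[OF assms])
  moreover have "x\<^sup>2 \<le> x" using assms by (simp add: power2_eq_square mult_left_le_one_le)
  ultimately show ?thesis by simp
qed

lemma fk_int: "(\<integral>\<^sup>+ t. fk k t \<partial>lborel) \<le> ennreal (4 * gk k)"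
proof (cases "sq k")
  case None then show ?thesis unfolding fk_def gk_def by (simp del: sq.simps)
next
  case (Some r)
  have rs: "r \<ge> s1" using Fb_ge[OF sq_in[OF Some]] .
  have u: "0 < uu r" "uu r \<le> 1/2" using uu_pos[of r] rs by auto
  have le: "exp r \<le> exp (r + 2 * uu r)" using u by simp
  have "(\<integral>\<^sup>+ t. fk k t \<partial>lborel) = (\<integral>\<^sup>+ t. ennreal (exp (- r)) * indicator {exp r .. exp (r + 2 * uu r)} t \<partial>lborel)"
    unfolding fk_def using Some by (simp del: sq.simps)
  also have "\<dots> = ennreal (exp (- r)) * emeasure lborel {exp r .. exp (r + 2 * uu r)}"
    by (rule nn_integral_cmult_indicator) simp
  also have "\<dots> = ennreal (exp (- r)) * ennreal (exp (r + 2 * uu r) - exp r)" using le by simp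
  also have "\<dots> = ennreal (exp (- r) * (exp (r + 2 * uu r) - exp r))" using le by (simp add: ennreal_mult)
  also have "exp (- r) * (exp (r + 2 * uu r) - exp r) = exp (2 * uu r) - 1"
    by (simp add: algebra_simps exp_add exp_minus)
  also have "ennreal (exp (2 * uu r) - 1) \<le> ennreal (4 * uu r)"
    using exp_le_lin[of "2 * uu r"] u by (intro ennreal_leI) auto
  finally show ?thesis unfolding gk_def using Some by (simp del: sq.simps)
qed

lemma pointwise: "ennreal (indicator ({0<..} - Nset) t / t) \<le> (\<Sum>k. fk k t)"
proof (cases "t \<in> {0<..} - Nset")
  case False then show ?thesis by simp
next
  case True
  then have t: "t > 0" "ln t \<in> Fb" unfolding Nset_def by auto
  obtain k r where kr: "sq k = Some r" "r \<le> ln t" "ln t \<le> r + 2 * uu r" using cover[OF t(2)] by blast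
  have t1: "exp r \<le> t" using kr t by (metis exp_ln exp_le_cancel_iff)
  have t2: "t \<le> exp (r + 2 * uu r)" using kr t by (metis exp_ln exp_le_cancel_iff)
  have "ennreal (indicator ({0<..} - Nset) t / t) = ennreal (1 / t)" using True by simp
  also have "\<dots> \<le> ennreal (exp (- r))"
  proof (intro ennreal_leI)
    have "1 / t \<le> 1 / exp r" using t1 t by (intro divide_left_mono) auto
    then show "1 / t \<le> exp (- r)" by (simp add: exp_minus divide_inverse)
  qed
  also have "\<dots> = fk k t" unfolding fk_def using kr t1 t2 by (simp del: sq.simps)
  also have "\<dots> \<le> (\<Sum>k. fk k t)" using sum_le_suminf[OF summableI, of "{k}" "\<lambda>k. fk k t"] by simp
  finally show ?thesis .
qed

lemma gk_summable: "summable gk"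
proof (rule bounded_imp_summable[of gk "4 / \<theta>"])
  show "0 \<le> gk n" for n by (rule gk_nonneg)
  show "(\<Sum>k\<le>n. gk k) \<le> 4 / \<theta>" for n
    using partial_bound'[of "Suc n"] by (simp add: lessThan_Suc_atMost)
qed

lemma log_measure: "finite_log_measure ({0<..} - Nset)"
  unfolding finite_log_measure_def
proof -
  have "(\<integral>\<^sup>+ t. ennreal (indicator ({0<..} - Nset) t / t) \<partial>lborel) \<le> (\<integral>\<^sup>+ t. (\<Sum>k. fk k t) \<partial>lborel)"
    by (intro nn_integral_mono pointwise)
  also have "\<dots> = (\<Sum>k. \<integral>\<^sup>+ t. fk k t \<partial>lborel)" by (rule nn_integral_suminf[OF fk_meas])
  also have "\<dots> \<le> (\<Sum>k. ennreal (4 * gk k))" by (intro suminf_le fk_int summableI)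
  also have "\<dots> = ennreal (\<Sum>k. 4 * gk k)"
    by (rule suminf_ennreal2) (use gk_nonneg gk_summable in auto)
  also have "\<dots> < \<infinity>" by simp
  finally show "(\<integral>\<^sup>+ t. ennreal (indicator ({0<..} - Nset) t / t) \<partial>lborel) < \<infinity>" .
qed

end


lemma powr_eventually_ge:
  assumes p: "p > 0"
  shows "\<exists>X\<ge>1. \<forall>A\<ge>X. (A::real) powr p \<ge> C"
proof -
  define X where "X = max 1 (\<bar>C\<bar> powr (1 / p))"
  have "\<forall>A\<ge>X. A powr p \<ge> C"
  proof (intro allI impI)
    fix A assume A: "A \<ge> X"
    have A1: "A \<ge> 1" using A unfolding X_def by simp
    show "A powr p \<ge> C"
    proof (cases "C \<le> 0")
      case True then show ?thesis using A1 by (smt (verit) powr_ge_zero)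
    next
      case False
      then have "A \<ge> C powr (1 / p)" using A unfolding X_def by simp
      then have "A powr p \<ge> (C powr (1 / p)) powr p" using p False by (intro powr_mono2) auto
      also have "(C powr (1 / p)) powr p = C" using p False by (simp add: powr_powr)
      finally show ?thesis .
    qed
  qed
  moreover have "X \<ge> 1" unfolding X_def by simp
  ultimately show ?thesis by blast
qed

lemma ln_le_powr: assumes "(A::real) > 0" "k > 0" shows "ln A \<le> A powr k / k"
proof -
  have "ln (A powr k) \<le> A powr k - 1" using assms by (intro ln_le_minus_one) simp
  then have "k * ln A \<le> A powr k" using assms by (simp add: ln_powr)
  then show ?thesis using assms by (simp add: field_simps)
qed

lemma asymp_facts:
  fixes \<theta> :: real
  assumes th: "0 < \<theta>" "\<theta> < 1/4"
  shows "\<exists>X\<ge>4. \<forall>A\<ge>X. A / 2 - A powr ((1 + \<theta>) / 2) - A powr ((1 + \<theta>) / 2) * ln (4 * A powr ((1 + \<theta>) / 2)) \<ge> A / 8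
      \<and> (A / 8) powr ((1 + 2 * \<theta>) / 2) \<ge> A powr ((1 + \<theta>) / 2)"
proof -
  define \<beta> where "\<beta> = (1 + \<theta>) / 2"
  define p where "p = (1 + 2 * \<theta>) / 2"
  define \<kappa> where "\<kappa> = (1 - \<beta>) / 2"
  have \<beta>: "1/2 < \<beta>" "\<beta> < 1" unfolding \<beta>_def using th by auto
  have \<kappa>: "\<kappa> > 0" unfolding \<kappa>_def using \<beta> by simp
  have b1: "1 - \<beta> > 0" using \<beta> by simp
  obtain X1 where X1: "X1 \<ge> 1" "\<forall>A\<ge>X1. A powr (1 - \<beta>) \<ge> 16 * (1 + ln 4) / 3"
    using powr_eventually_ge[OF b1, of "16 * (1 + ln 4) / 3"] by blast
  obtain X2 where X2: "X2 \<ge> 1" "\<forall>A\<ge>X2. A powr \<kappa> \<ge> 16 * \<beta> / (3 * \<kappa>)"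
    using powr_eventually_ge[OF \<kappa>, of "16 * \<beta> / (3 * \<kappa>)"] by blast
  have pb: "p - \<beta> > 0" unfolding p_def \<beta>_def using th by simp
  obtain X3 where X3: "X3 \<ge> 1" "\<forall>A\<ge>X3. A powr (p - \<beta>) \<ge> 8 powr p"
    using powr_eventually_ge[OF pb, of "8 powr p"] by blast
  define X where "X = max 4 (max X1 (max X2 X3))"
  have "\<forall>A\<ge>X. A / 2 - A powr \<beta> - A powr \<beta> * ln (4 * A powr \<beta>) \<ge> A / 8 \<and> (A / 8) powr p \<ge> A powr \<beta>"
  proof (intro allI impI conjI)
    fix A assume A: "A \<ge> X"
    have A4: "A \<ge> 4" and AX1: "A \<ge> X1" and AX2: "A \<ge> X2" and AX3: "A \<ge> X3" using A unfolding X_def by auto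
    have Ap: "A > 0" using A4 by simp
    have e1: "A powr \<beta> * A powr (1 - \<beta>) = A" using Ap by (simp flip: powr_add)
    have e2: "A powr (\<beta> + \<kappa>) * A powr \<kappa> = A" using Ap unfolding \<kappa>_def by (simp flip: powr_add)
    have t1: "(1 + ln 4) * A powr \<beta> \<le> 3 * A / 16"
    proof -
      have "A powr \<beta> * (16 * (1 + ln 4) / 3) \<le> A powr \<beta> * A powr (1 - \<beta>)"
        using X1(2) AX1 by (intro mult_left_mono) auto
      then show ?thesis using e1 by (simp add: field_simps)
    qed
    have t2: "\<beta> / \<kappa> * A powr (\<beta> + \<kappa>) \<le> 3 * A / 16"
    proof -
      have "A powr (\<beta> + \<kappa>) * (16 * \<beta> / (3 * \<kappa>)) \<le> A powr (\<beta> + \<kappa>) * A powr \<kappa>"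
        using X2(2) AX2 by (intro mult_left_mono) auto
      then show ?thesis using e2 \<kappa> by (simp add: field_simps)
    qed
    have lnA: "ln A \<le> A powr \<kappa> / \<kappa>" by (rule ln_le_powr[OF Ap \<kappa>])
    have "ln (4 * A powr \<beta>) = ln 4 + \<beta> * ln A" using Ap by (simp add: ln_mult ln_powr)
    also have "\<dots> \<le> ln 4 + \<beta> * (A powr \<kappa> / \<kappa>)" using lnA \<beta> by (intro add_left_mono mult_left_mono) auto
    finally have "A powr \<beta> * ln (4 * A powr \<beta>) \<le> A powr \<beta> * (ln 4 + \<beta> * (A powr \<kappa> / \<kappa>))"
      by (intro mult_left_mono) auto
    also have "\<dots> = ln 4 * A powr \<beta> + \<beta> / \<kappa> * A powr (\<beta> + \<kappa>)"
      by (simp add: powr_add algebra_simps)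
    finally have "A powr \<beta> * ln (4 * A powr \<beta>) \<le> ln 4 * A powr \<beta> + \<beta> / \<kappa> * A powr (\<beta> + \<kappa>)" .
    moreover have t1': "A powr \<beta> + ln 4 * A powr \<beta> \<le> 3 * A / 16" using t1 by (simp add: algebra_simps)
    ultimately show "A / 2 - A powr \<beta> - A powr \<beta> * ln (4 * A powr \<beta>) \<ge> A / 8" using t2
      by linarith
    have "(A / 8) powr p = A powr p / 8 powr p" using Ap by (simp add: powr_divide)
    also have "A powr p = A powr \<beta> * A powr (p - \<beta>)" by (simp flip: powr_add)
    finally have eq: "(A / 8) powr p = A powr \<beta> * A powr (p - \<beta>) / 8 powr p" .
    have "A powr \<beta> * 8 powr p \<le> A powr \<beta> * A powr (p - \<beta>)"
      using X3(2) AX3 by (intro mult_left_mono) auto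
    then show "(A / 8) powr p \<ge> A powr \<beta>" unfolding eq by (simp add: field_simps)
  qed
  moreover have "X \<ge> 4" unfolding X_def by simp
  ultimately show ?thesis unfolding \<beta>_def p_def by blast
qed


lemma lin_aux: "(x::real) / 8 \<le> x / 2 - p - q \<Longrightarrow> x / 8 \<le> (x - 2 * p) / 2 - q"
  by (simp add: field_simps)

context WVB begin

lemma uu_mult: assumes "t \<ge> s1" shows "uu t * am t powr ((1 + \<theta>) / 2) = 1"
proof -
  have "am t > 0" using big[of t] assms by simp
  then show ?thesis unfolding uu_def by (simp flip: powr_add)
qed

lemma good_from_not_bad:
  assumes t: "t \<ge> s1" "t \<notin> Fb" and K: "K \<ge> am t powr ((1 + \<theta>) / 2)"
  shows "good_at t (1 / K)"
proof -
  define u where "u = uu t"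
  define P where "P = am t powr ((1 + \<theta>) / 2)"
  have A4: "am t \<ge> 4" using big[of t] t by simp
  have P0: "P > 0" unfolding P_def using A4 by simp
  have uP: "u * P = 1" unfolding u_def P_def by (rule uu_mult[OF t(1)])
  have u0: "u > 0" unfolding u_def using uu_pos[of t] t by simp
  have K0: "K > 0" using K P0 unfolding P_def by linarith
  define v where "v = 1 / K"
  have v0: "v > 0" unfolding v_def using K0 by simp
  have vu: "v \<le> u"
  proof -
    have "1 / K \<le> 1 / P" using K P0 K0 unfolding P_def by (intro divide_left_mono) auto
    also have "1 / P = u" using uP P0 by (simp add: field_simps)
    finally show ?thesis unfolding v_def .
  qed
  have nb: "am (t + u) - am (t - u) < 2 * P" using t unfolding Fb_def u_def P_def by auto
  have d1: "am (t + v) - am t \<le> am (t + u) - am (t - u)"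
    using am_mono[of "t + v" "t + u"] am_mono[of "t - u" t] vu u0 by simp
  have d2: "am t - am (t - v) \<le> am (t + u) - am (t - u)"
    using am_mono[of t "t + u"] am_mono[of "t - u" "t - v"] vu u0 by simp
  have n1: "0 \<le> am (t + v) - am t" using am_mono[of t "t + v"] v0 by simp
  have n2: "0 \<le> am t - am (t - v)" using am_mono[of "t - v" t] v0 by simp
  have key: "u * (am (t + u) - am (t - u)) \<le> 2"
  proof -
    have "u * (am (t + u) - am (t - u)) \<le> u * (2 * P)" using nb u0 by (intro mult_left_mono) auto
    also have "\<dots> = 2" using uP by simp
    finally show ?thesis .
  qed
  have "psi (t + v) - psi t - v * am t \<le> v * (am (t + v) - am t)" by (rule psi_upper[OF v0])
  also have "\<dots> \<le> u * (am (t + u) - am (t - u))" using vu d1 n1 v0 by (intro mult_mono) auto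
  finally have g1: "psi (t + v) - psi t - v * am t \<le> 2" using key by simp
  have "psi (t - v) - psi t + v * am t \<le> v * (am t - am (t - v))" by (rule psi_lower[OF v0])
  also have "\<dots> \<le> u * (am (t + u) - am (t - u))" using vu d2 n2 v0 by (intro mult_mono) auto
  finally have g2: "psi (t - v) - psi t + v * am t \<le> 2" using key by simp
  show ?thesis unfolding good_at_def v_def[symmetric] using v0 g1 g2 by simp
qed

lemma K_big:
  assumes t: "t \<ge> s1" "t \<notin> Fb"
    and asy: "am t / 2 - am t powr ((1 + \<theta>) / 2) - am t powr ((1 + \<theta>) / 2) * ln (4 * am t powr ((1 + \<theta>) / 2)) \<ge> am t / 8"
      "(am t / 8) powr ((1 + 2 * \<theta>) / 2) \<ge> am t powr ((1 + \<theta>) / 2)"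
  shows "K_fun a (2 * \<theta>) (exp t) \<ge> am t powr ((1 + \<theta>) / 2)"
proof -
  define u where "u = uu t"
  define P where "P = am t powr ((1 + \<theta>) / 2)"
  define A where "A = am t"
  have A4: "A \<ge> 4" using big[of t] t unfolding A_def by simp
  have P0: "P > 0" unfolding P_def using big[of t] t by simp
  have uP: "u * P = 1" unfolding u_def P_def by (rule uu_mult[OF t(1)])
  have u: "0 < uu t" "uu t \<le> 1/2" using uu_pos[of t] t by auto
  have nb: "am (t + u) - am (t - u) < 2 * P" using t unfolding Fb_def u_def P_def by auto
  have "am t \<le> am (t + u)" using u unfolding u_def by (intro am_mono) simp
  then have amu: "am (t - u) \<ge> A - 2 * P" using nb unfolding A_def by simp
  define N where "N = real (central_index a (exp t))"
  have ci: "N \<ge> am (t - u) / 2 - ln (4 / u) / u" unfolding N_def u_def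
    by (rule ci_lower) (use u in auto)
  have iu: "1 / u = P"
  proof -
    have "u \<noteq> 0" using u unfolding u_def by simp
    then show ?thesis using uP by (simp add: field_simps)
  qed
  have eq: "ln (4 / u) / u = P * ln (4 * P)" using iu by (simp add: divide_inverse mult.commute)
  have ci': "N \<ge> am (t - u) / 2 - P * ln (4 * P)" using ci unfolding eq .
  have h2: "(A - 2 * P) / 2 \<le> am (t - u) / 2" using amu by (simp add: divide_right_mono)
  have "(A - 2 * P) / 2 - P * ln (4 * P) \<le> am (t - u) / 2 - P * ln (4 * P)" using h2 by (rule diff_right_mono)
  then have "N \<ge> (A - 2 * P) / 2 - P * ln (4 * P)" using ci' by (rule order_trans)
  also have "(A - 2 * P) / 2 - P * ln (4 * P) \<ge> A / 8" using lin_aux[OF asy(1)] unfolding A_def P_def .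
  finally have NA: "N \<ge> A / 8" .
  have "K_fun a (2 * \<theta>) (exp t) = N powr ((1 + 2 * \<theta>) / 2)" unfolding K_fun_def N_def ..
  also have "\<dots> \<ge> (A / 8) powr ((1 + 2 * \<theta>) / 2)" using NA A4 th by (intro powr_mono2) auto
  finally show ?thesis using asy(2) unfolding A_def by simp
qed

end


theorem proposition3p13:
  fixes a :: "nat \<Rightarrow> real" and \<gamma> :: real
  assumes nonneg: "\<And>n. a n \<ge> 0"
    and entire: "\<And>z::complex. summable (\<lambda>n. complex_of_real ((a n)\<^sup>2) * z ^ n)"
    and transcendental: "infinite {n. a n \<noteq> 0}"
    and gamma: "0 < \<gamma>" "\<gamma> < 1/2"
  shows "\<exists>\<N>. \<N> \<subseteq> {0<..} \<and> \<N> \<in> sets lborel \<and>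
           finite_log_measure ({0<..} - \<N>) \<and>
           local_delta_admissible (H_fun a) (A_fun a) (B_fun a)
             (\<lambda>t. Re (B_fun a (of_real t)) / (K_fun a \<gamma> (exp t)) ^ 3)
             {t. exp t \<in> \<N>}"
proof -
  interpret WV a using entire transcendental by unfold_locales
  define \<theta> where "\<theta> = \<gamma> / 2"
  have th: "0 < \<theta>" "\<theta> < 1/4" unfolding \<theta>_def using gamma by auto
  have g2: "\<gamma> = 2 * \<theta>" unfolding \<theta>_def by simp
  obtain X where X: "X \<ge> 4" "\<forall>A\<ge>X. A / 2 - A powr ((1 + \<theta>) / 2) - A powr ((1 + \<theta>) / 2) * ln (4 * A powr ((1 + \<theta>) / 2)) \<ge> A / 8
      \<and> (A / 8) powr ((1 + 2 * \<theta>) / 2) \<ge> A powr ((1 + \<theta>) / 2)"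
    using asymp_facts[OF th] by blast
  obtain s0 where s0: "\<forall>s\<ge>s0. am s \<ge> X" using am_eventually by blast
  define s1 where "s1 = s0 + 1"
  interpret B: WVB a \<theta> s1
  proof unfold_locales
    show "0 < \<theta>" "\<theta> < 1" using th by auto
    fix s assume "s1 - 1 \<le> s"
    then have "s \<ge> s0" unfolding s1_def by simp
    then have "am s \<ge> X" using s0 by blast
    then show "4 \<le> am s" using X(1) by simp
  qed
  define D :: real where "D = 2 * (48 * exp 2) + 4 * (4 * exp 2) ^ 3 + 2 * (4 * exp 2) + 1"
  have Dpos: "D > 0" unfolding D_def by (simp add: add_pos_pos)
  have adm: "local_delta_admissible (H_fun a) (A_fun a) (B_fun a)
             (\<lambda>t. Re (B_fun a (of_real t)) / (K_fun a \<gamma> (exp t)) ^ 3)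
             {t. exp t \<in> B.Nset}"
    unfolding local_delta_admissible_def
  proof (intro allI impI)
    fix \<epsilon> :: real assume e: "\<epsilon> > 0"
    show "\<exists>\<eta>>0. \<exists>t0. \<forall>t\<in>{t. exp t \<in> B.Nset}. t0 < t \<longrightarrow>
         (\<exists>L. continuous_on (cball 0 (\<eta> * (Re (B_fun a (complex_of_real t)) / K_fun a \<gamma> (exp t) ^ 3))) L \<and>
              L holomorphic_on ball 0 (\<eta> * (Re (B_fun a (complex_of_real t)) / K_fun a \<gamma> (exp t) ^ 3)) \<and>
              L 0 = 0 \<and>
              (\<forall>\<tau>. cmod \<tau> \<le> \<eta> * (Re (B_fun a (complex_of_real t)) / K_fun a \<gamma> (exp t) ^ 3) \<longrightarrow>
                   exp (L \<tau>) = H_fun a (complex_of_real t + \<tau>) / H_fun a (complex_of_real t) \<and>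
                   cmod (L \<tau> - (\<tau> * A_fun a (complex_of_real t) + \<tau>\<^sup>2 * B_fun a (complex_of_real t) / 2))
                   \<le> \<epsilon> * (cmod \<tau>)\<^sup>2 * Re (B_fun a (complex_of_real t))))"
    proof (rule exI[of _ "min \<epsilon> 1 / D"], rule conjI)
      show "min \<epsilon> 1 / D > 0" using e Dpos by simp
      show "\<exists>t0. \<forall>t\<in>{t. exp t \<in> B.Nset}. t0 < t \<longrightarrow>
         (\<exists>L. continuous_on (cball 0 (min \<epsilon> 1 / D * (Re (B_fun a (complex_of_real t)) / K_fun a \<gamma> (exp t) ^ 3))) L \<and>
              L holomorphic_on ball 0 (min \<epsilon> 1 / D * (Re (B_fun a (complex_of_real t)) / K_fun a \<gamma> (exp t) ^ 3)) \<and>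
              L 0 = 0 \<and>
              (\<forall>\<tau>. cmod \<tau> \<le> min \<epsilon> 1 / D * (Re (B_fun a (complex_of_real t)) / K_fun a \<gamma> (exp t) ^ 3) \<longrightarrow>
                   exp (L \<tau>) = H_fun a (complex_of_real t + \<tau>) / H_fun a (complex_of_real t) \<and>
                   cmod (L \<tau> - (\<tau> * A_fun a (complex_of_real t) + \<tau>\<^sup>2 * B_fun a (complex_of_real t) / 2))
                   \<le> \<epsilon> * (cmod \<tau>)\<^sup>2 * Re (B_fun a (complex_of_real t))))"
      proof (rule exI[of _ s1], intro ballI impI)
      fix t assume t: "t \<in> {t. exp t \<in> B.Nset}" "s1 < t"
      have tF: "t \<notin> B.Fb" using t(1) unfolding B.Nset_def by simp
      have ts1: "t \<ge> s1" using t by simp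
      have amX: "am t \<ge> X" using s0 ts1 unfolding s1_def by simp
      have asy0: "am t / 2 - am t powr ((1 + \<theta>) / 2) - am t powr ((1 + \<theta>) / 2) * ln (4 * am t powr ((1 + \<theta>) / 2)) \<ge> am t / 8
          \<and> (am t / 8) powr ((1 + 2 * \<theta>) / 2) \<ge> am t powr ((1 + \<theta>) / 2)"
        using X(2) amX by blast
      note asy = conjunct1[OF asy0] conjunct2[OF asy0]
      have Kb: "K_fun a \<gamma> (exp t) \<ge> am t powr ((1 + \<theta>) / 2)"
        unfolding g2 by (rule B.K_big[OF ts1 tF asy])
      have K0: "K_fun a \<gamma> (exp t) > 0"
      proof -
        have "am t > 0" using amX X(1) by simp
        then have "am t powr ((1 + \<theta>) / 2) > 0" by simp
    then show ?thesis using Kb by linarith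
      qed
      have good: "good_at t (1 / K_fun a \<gamma> (exp t))" by (rule B.good_from_not_bad[OF ts1 tF Kb])
      show "\<exists>L. continuous_on (cball 0 (min \<epsilon> 1 / D * (Re (B_fun a (complex_of_real t)) / K_fun a \<gamma> (exp t) ^ 3))) L \<and>
              L holomorphic_on ball 0 (min \<epsilon> 1 / D * (Re (B_fun a (complex_of_real t)) / K_fun a \<gamma> (exp t) ^ 3)) \<and>
              L 0 = 0 \<and>
              (\<forall>\<tau>. cmod \<tau> \<le> min \<epsilon> 1 / D * (Re (B_fun a (complex_of_real t)) / K_fun a \<gamma> (exp t) ^ 3) \<longrightarrow>
                   exp (L \<tau>) = H_fun a (complex_of_real t + \<tau>) / H_fun a (complex_of_real t) \<and>
                   cmod (L \<tau> - (\<tau> * A_fun a (complex_of_real t) + \<tau>\<^sup>2 * B_fun a (complex_of_real t) / 2))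
                   \<le> \<epsilon> * (cmod \<tau>)\<^sup>2 * Re (B_fun a (complex_of_real t)))"
        using local_at[OF e K0 good] unfolding D_def .
      qed
    qed
  qed
  show ?thesis
    by (intro exI[of _ B.Nset] conjI B.Nset_sub B.Nset_sets B.log_measure adm)
qed


end
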